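(* Let $\rho\in\mathbb R$, let $\mathbf a=(a_{m,n})_{m,n=1}^\infty$ be a matrix with complex entries and let $\kappa_{\mathbf a}$ be a Dirichlet series kernel on $\mathbb H_\rho$ with coefficient matrix $\mathbf a$. Then the following are equivalent: (i) $\kappa_{\mathbf a}$ is positive semi-definite on $\mathbb H_\rho$; (ii) $\mathbf a$ is formally positive semi-definite. Moreover, if (i) holds, then for every positive integer $n$ the analytic symbol $A_{n,\mathbf a}$ belongs to $\mathscr H_{\mathbf a}$ and $a_{m,n}=\langle A_{n,\mathbf a},A_{m,\mathbf a}\rangle_{\mathscr H_{\mathbf a}}$ for all $m,n\ge1$.
   Context: $\mathbb H_\rho=\{s\in\mathbb C:\Re(s)>\rho\}$. A double Dirichlet series $\sum_{m,n\ge1}c_{m,n}m^{-s}n^{-u}$ is regularly convergent at $(s_0,u_0)$ if the double series converges there and, for all integers $m,n\ge1$, $\sum_{m}c_{m,n}m^{-s_0}$ and $\sum_{n}c_{m,n}n^{-u_0}$ converge. For a complex matrix $\mathbf a$, $\kappa_{\mathbf a}(s,u)=\sum_{m,n\ge1}a_{m,n}m^{-s}n^{-\bar u}$ is a Dirichlet series kernel on $\mathbb H_\rho$ if $(s,u)\mapsto\kappa_{\mathbf a}(s,\bar u)$ is regularly convergent at every point of $\mathbb H_\rho\times\mathbb H_\rho$. A kernel $\kappa$ on a set $X$ is positive semi-definite if every matrix $(\kappa(x_i,x_j))_{i,j=1}^N$ ($x_i\in X$) is positive semi-definite. The matrix $\mathbf a$ is formally positive semi-definite if the kernel $(m,n)\mapsto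 a_{m,n}$ on $\mathbb N$ is positive semi-definite (i.e. all finite sections $(a_{m,n})_{m,n\in F}$ are positive semi-definite). If $\kappa_{\mathbf a}$ is positive semi-definite, $\mathscr H_{\mathbf a}$ is the reproducing kernel Hilbert space of functions on $\mathbb H_\rho$ with kernel $\kappa_{\mathbf a}$ (i.e. $\kappa_{\mathbf a}(\cdot,t)\in\mathscr H_{\mathbf a}$ and $\langle f,\kappa_{\mathbf a}(\cdot,t)\rangle=f(t)$). The analytic symbols of $\mathbf a$ are the Dirichlet series $A_{n,\mathbf a}(s)=\sum_{m\ge1}a_{m,n}m^{-s}$, $s\in\mathbb H_\rho$, $n\ge1$. *)

theory Defs
  imports "HOL-Analysis.Analysis"
begin

definition halfplane :: "real \<Rightarrow> complex set" where
  "halfplane \<rho> = {s. Re s > \<rho>}"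

definition dpartial :: "(nat \<Rightarrow> nat \<Rightarrow> complex) \<Rightarrow> nat \<Rightarrow> nat \<Rightarrow> complex" where
  "dpartial c M N = (\<Sum>m=1..M. \<Sum>n=1..N. c m n)"

definition dconverges_to :: "(nat \<Rightarrow> nat \<Rightarrow> complex) \<Rightarrow> complex \<Rightarrow> bool" where
  "dconverges_to c L \<longleftrightarrow>
     ((\<lambda>(M, N). dpartial c M N) \<longlongrightarrow> L) (sequentially \<times>\<^sub>F sequentially)"

definition dsum :: "(nat \<Rightarrow> nat \<Rightarrow> complex) \<Rightarrow> complex" where
  "dsum c = Lim (sequentially \<times>\<^sub>F sequentially) (\<lambda>(M, N). dpartial c M N)"

definition regularly_convergent :: "(nat \<Rightarrow> nat \<Rightarrow> complex) \<Rightarrow> bool" where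
  "regularly_convergent c \<longleftrightarrow>
     (\<exists>L. dconverges_to c L) \<and>
     (\<forall>n\<ge>1. summable (\<lambda>k. c (Suc k) n)) \<and>
     (\<forall>m\<ge>1. summable (\<lambda>k. c m (Suc k)))"

definition dterm :: "(nat \<Rightarrow> nat \<Rightarrow> complex) \<Rightarrow> complex \<Rightarrow> complex \<Rightarrow> nat \<Rightarrow> nat \<Rightarrow> complex" where
  "dterm a s u m n = a m n * (of_nat m) powr (- s) * (of_nat n) powr (- u)"

definition kappa :: "(nat \<Rightarrow> nat \<Rightarrow> complex) \<Rightarrow> complex \<Rightarrow> complex \<Rightarrow> complex" where
  "kappa a s u = dsum (dterm a s (cnj u))"

definition dirichlet_series_kernel :: "(nat \<Rightarrow> nat \<Rightarrow> complex) \<Rightarrow> real \<Rightarrow> bool" where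
  "dirichlet_series_kernel a \<rho> \<longleftrightarrow>
     (\<forall>s\<in>halfplane \<rho>. \<forall>u\<in>halfplane \<rho>. regularly_convergent (dterm a s u))"

definition psd_kernel :: "('x \<Rightarrow> 'x \<Rightarrow> complex) \<Rightarrow> 'x set \<Rightarrow> bool" where
  "psd_kernel K X \<longleftrightarrow>
     (\<forall>N x. (\<forall>i<N. x i \<in> X) \<longrightarrow>
        (\<forall>i<N. \<forall>j<N. K (x i) (x j) = cnj (K (x j) (x i))) \<and>
        (\<forall>c :: nat \<Rightarrow> complex.
           Im (\<Sum>i<N. \<Sum>j<N. cnj (c i) * K (x i) (x j) * c j) = 0 \<and>
           Re (\<Sum>i<N. \<Sum>j<N. cnj (c i) * K (x i) (x j) * c j) \<ge> 0))"

text \<open>Reproducing kernel Hilbert space on X with kernel K: V is a complex vector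
  space of functions on X (represented as functions vanishing outside X), ip is an
  inner product on V (linear in the first argument), V is complete for the induced
  norm, the kernel sections K(.,t) belong to V and reproduce point evaluations.\<close>
definition rkhs ::
  "('x \<Rightarrow> 'x \<Rightarrow> complex) \<Rightarrow> 'x set \<Rightarrow> ('x \<Rightarrow> complex) set \<Rightarrow>
   (('x \<Rightarrow> complex) \<Rightarrow> ('x \<Rightarrow> complex) \<Rightarrow> complex) \<Rightarrow> bool" where
  "rkhs K X V ip \<longleftrightarrow>
     (\<forall>f\<in>V. \<forall>x. x \<notin> X \<longrightarrow> f x = 0) \<and>
     (\<lambda>x. 0) \<in> V \<and>
     (\<forall>f\<in>V. \<forall>g\<in>V. (\<lambda>x. f x + g x) \<in> V) \<and>
     (\<forall>c. \<forall>f\<in>V. (\<lambda>x. c * f x) \<in> V) \<and>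
     (\<forall>f\<in>V. \<forall>g\<in>V. \<forall>h\<in>V. ip (\<lambda>x. f x + g x) h = ip f h + ip g h) \<and>
     (\<forall>c. \<forall>f\<in>V. \<forall>g\<in>V. ip (\<lambda>x. c * f x) g = c * ip f g) \<and>
     (\<forall>f\<in>V. \<forall>g\<in>V. ip g f = cnj (ip f g)) \<and>
     (\<forall>f\<in>V. Re (ip f f) \<ge> 0 \<and> (ip f f = 0 \<longrightarrow> f = (\<lambda>x. 0))) \<and>
     (\<forall>F :: nat \<Rightarrow> 'x \<Rightarrow> complex. (\<forall>k. F k \<in> V) \<longrightarrow>
        (\<forall>e>0. \<exists>N. \<forall>p\<ge>N. \<forall>q\<ge>N.
            Re (ip (\<lambda>x. F p x - F q x) (\<lambda>x. F p x - F q x)) < e) \<longrightarrow>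
        (\<exists>f\<in>V. (\<lambda>k. Re (ip (\<lambda>x. F k x - f x) (\<lambda>x. F k x - f x))) \<longlonglongrightarrow> 0)) \<and>
     (\<forall>t\<in>X. (\<lambda>x. if x \<in> X then K x t else 0) \<in> V \<and>
        (\<forall>f\<in>V. ip f (\<lambda>x. if x \<in> X then K x t else 0) = f t))"

definition analytic_symbol :: "(nat \<Rightarrow> nat \<Rightarrow> complex) \<Rightarrow> real \<Rightarrow> nat \<Rightarrow> complex \<Rightarrow> complex" where
  "analytic_symbol a \<rho> n s =
     (if s \<in> halfplane \<rho> then (\<Sum>k. a (Suc k) n * (of_nat (Suc k)) powr (- s)) else 0)"

end

theory Submission
  imports Defs
begin

lemma dsum_eq: "dconverges_to c L \<Longrightarrow> dsum c = L"
  unfolding dsum_def dconverges_to_def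
  by (rule tendsto_Lim) (simp_all add: prod_filter_eq_bot)

lemma diag_lim: "dconverges_to c L \<Longrightarrow> (\<lambda>N. dpartial c N N) \<longlonglongrightarrow> L"
proof -
  assume "dconverges_to c L"
  hence *: "((\<lambda>(M, N). dpartial c M N) \<longlongrightarrow> L) (sequentially \<times>\<^sub>F sequentially)"
    unfolding dconverges_to_def .
  have "filterlim (\<lambda>N. (N, N)) (sequentially \<times>\<^sub>F sequentially) sequentially"
    by (intro filterlim_Pair filterlim_ident)
  from filterlim_compose[OF * this] show ?thesis by simp
qed

lemma iter_lim:
  assumes "dconverges_to c L"
    and col: "\<And>n. n \<ge> 1 \<Longrightarrow> (\<lambda>M. \<Sum>m=1..M. c m n) \<longlonglongrightarrow> col n"
  shows "(\<lambda>N. \<Sum>n=1..N. col n) \<longlonglongrightarrow> L"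
proof (rule LIMSEQ_I)
  fix r :: real assume r: "r > 0"
  from assms(1) have *: "((\<lambda>(M, N). dpartial c M N) \<longlongrightarrow> L) (sequentially \<times>\<^sub>F sequentially)"
    unfolding dconverges_to_def .
  have "eventually (\<lambda>x. dist ((\<lambda>(M, N). dpartial c M N) x) L < r/2) (sequentially \<times>\<^sub>F sequentially)"
    using tendstoD[OF *, of "r/2"] r by simp
  then obtain N0 where N0: "\<And>M N. M \<ge> N0 \<Longrightarrow> N \<ge> N0 \<Longrightarrow> dist (dpartial c M N) L < r/2"
    unfolding eventually_prod_sequentially by auto
  show "\<exists>no. \<forall>N\<ge>no. norm ((\<Sum>n=1..N. col n) - L) < r"
  proof (intro exI allI impI)
    fix N assume N: "N \<ge> N0"
    have lim: "(\<lambda>M. dpartial c M N) \<longlonglongrightarrow> (\<Sum>n=1..N. col n)"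
      unfolding dpartial_def
      by (subst sum.swap) (intro tendsto_sum col, simp)
    have "dist (\<Sum>n=1..N. col n) L \<le> r/2"
    proof (rule Lim_bounded[where M=N0])
      show "(\<lambda>M. dist (dpartial c M N) L) \<longlonglongrightarrow> dist (\<Sum>n=1..N. col n) L"
        by (intro tendsto_intros lim)
      show "\<forall>M\<ge>N0. dist (dpartial c M N) L \<le> r / 2" using N0 N by (auto intro: less_imp_le)
    qed
    thus "norm ((\<Sum>n=1..N. col n) - L) < r" using r by (simp add: dist_norm)
  qed
qed

lemma summable_bounded_terms:
  fixes f :: "nat \<Rightarrow> complex"
  assumes "summable f" shows "\<exists>B\<ge>0. \<forall>k. norm (f k) \<le> B"
proof -
  have "convergent f" using summable_LIMSEQ_zero[OF assms] by (auto simp: convergent_def)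
  hence "Bseq f" by (rule convergent_imp_Bseq)
  thus ?thesis unfolding Bseq_def by (auto intro: less_imp_le)
qed

lemma dpartial_diff:
  assumes "m \<ge> 1" "n \<ge> 1"
  shows "c m n = dpartial c m n - dpartial c (m-1) n - dpartial c m (n-1) + dpartial c (m-1) (n-1)"
proof -
  obtain m' where m: "m = Suc m'" using assms by (cases m) auto
  obtain n' where n: "n = Suc n'" using assms by (cases n) auto
  show ?thesis unfolding dpartial_def m n by (simp add: algebra_simps)
qed

lemma norm4: "norm (a - b - c + d) \<le> norm a + norm b + norm c + norm (d::'a::real_normed_vector)"
proof -
  have "norm (a-b-c+d) \<le> norm (a-b-c) + norm d" by (rule norm_triangle_ineq)
  moreover have "norm (a-b-c) \<le> norm (a-b) + norm c" by (rule norm_triangle_ineq4)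
  moreover have "norm (a-b) \<le> norm a + norm b" by (rule norm_triangle_ineq4)
  ultimately show ?thesis by linarith
qed

lemma regconv_bounded:
  assumes rc: "regularly_convergent c" and z1: "\<And>n. c 0 n = 0" and z2: "\<And>m. c m 0 = 0"
  shows "\<exists>B. \<forall>m n. norm (c m n) \<le> B"
proof -
  from rc obtain L where L: "dconverges_to c L" unfolding regularly_convergent_def by auto
  hence *: "((\<lambda>(M, N). dpartial c M N) \<longlongrightarrow> L) (sequentially \<times>\<^sub>F sequentially)"
    unfolding dconverges_to_def .
  have "eventually (\<lambda>x. dist ((\<lambda>(M, N). dpartial c M N) x) L < 1) (sequentially \<times>\<^sub>F sequentially)"
    using tendstoD[OF *, of 1] by simp
  then obtain N0 where N0: "\<And>M N. M \<ge> N0 \<Longrightarrow> N \<ge> N0 \<Longrightarrow> dist (dpartial c M N) L < 1"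
    unfolding eventually_prod_sequentially by auto
  have "\<forall>m. \<exists>B\<ge>0. m \<ge> 1 \<longrightarrow> (\<forall>k. norm (c m (Suc k)) \<le> B)"
  proof
    fix m show "\<exists>B\<ge>0. m \<ge> 1 \<longrightarrow> (\<forall>k. norm (c m (Suc k)) \<le> B)"
    proof (cases "m \<ge> 1")
      case True
      with rc have "summable (\<lambda>k. c m (Suc k))" unfolding regularly_convergent_def by auto
      from summable_bounded_terms[OF this] show ?thesis by auto
    qed auto
  qed
  then obtain Br where Br: "\<And>m. Br m \<ge> 0" "\<And>m k. m \<ge> 1 \<Longrightarrow> norm (c m (Suc k)) \<le> Br m"
    by metis
  have "\<forall>n. \<exists>B\<ge>0. n \<ge> 1 \<longrightarrow> (\<forall>k. norm (c (Suc k) n) \<le> B)"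
  proof
    fix n show "\<exists>B\<ge>0. n \<ge> 1 \<longrightarrow> (\<forall>k. norm (c (Suc k) n) \<le> B)"
    proof (cases "n \<ge> 1")
      case True
      with rc have "summable (\<lambda>k. c (Suc k) n)" unfolding regularly_convergent_def by auto
      from summable_bounded_terms[OF this] show ?thesis by auto
    qed auto
  qed
  then obtain Bc where Bc: "\<And>n. Bc n \<ge> 0" "\<And>n k. n \<ge> 1 \<Longrightarrow> norm (c (Suc k) n) \<le> Bc n"
    by metis
  define B where "B = 4 + (\<Sum>m\<le>N0. Br m) + (\<Sum>n\<le>N0. Bc n)"
  have sBr: "Br m \<le> (\<Sum>m\<le>N0. Br m)" if "m \<le> N0" for m
    using that Br(1) by (intro member_le_sum) auto
  have sBc: "Bc n \<le> (\<Sum>n\<le>N0. Bc n)" if "n \<le> N0" for n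
    using that Bc(1) by (intro member_le_sum) auto
  have s0: "0 \<le> (\<Sum>m\<le>N0. Br m)" "0 \<le> (\<Sum>n\<le>N0. Bc n)"
    using Br(1) Bc(1) by (auto intro: sum_nonneg)
  have "norm (c m n) \<le> B" for m n
  proof (cases "m = 0 \<or> n = 0")
    case True thus ?thesis using z1 z2 s0 by (auto simp: B_def)
  next
    case False
    hence m1: "m \<ge> 1" and n1: "n \<ge> 1" by auto
    show ?thesis
    proof (cases "m \<le> N0")
      case True
      obtain k where "n = Suc k" using n1 by (cases n) auto
      hence "norm (c m n) \<le> Br m" using Br(2)[OF m1] by simp
      thus ?thesis using sBr[OF True] s0 by (simp add: B_def)
    next
      case mN: False
      show ?thesis
      proof (cases "n \<le> N0")
        case True
        obtain k where "m = Suc k" using m1 by (cases m) auto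
        hence "norm (c m n) \<le> Bc n" using Bc(2)[OF n1] by simp
        thus ?thesis using sBc[OF True] s0 by (simp add: B_def)
      next
        case nN: False
        have d1: "norm (dpartial c m n - L) < 1" using N0[of m n] mN nN by (simp add: dist_norm)
        have d2: "norm (dpartial c (m-1) n - L) < 1" using N0[of "m-1" n] mN nN by (simp add: dist_norm)
        have d3: "norm (dpartial c m (n-1) - L) < 1" using N0[of m "n-1"] mN nN by (simp add: dist_norm)
        have d4: "norm (dpartial c (m-1) (n-1) - L) < 1" using N0[of "m-1" "n-1"] mN nN by (simp add: dist_norm)
        have "c m n = (dpartial c m n - L) - (dpartial c (m-1) n - L) - (dpartial c m (n-1) - L)
                 + (dpartial c (m-1) (n-1) - L)"
          using dpartial_diff[OF m1 n1, of c] by (simp add: algebra_simps)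
        hence "norm (c m n) \<le> norm (dpartial c m n - L) + norm (dpartial c (m-1) n - L)
                 + norm (dpartial c m (n-1) - L) + norm (dpartial c (m-1) (n-1) - L)"
          using norm4 by metis
        thus ?thesis using d1 d2 d3 d4 s0 by (simp add: B_def)
      qed
    qed
  qed
  thus ?thesis by blast
qed

lemma powr_nat_complex:
  assumes "q > 0"
  shows "of_nat q powr (z::complex) = of_real (real q powr Re z) * exp (\<i> * of_real (Im z * ln (real q)))"
proof -
  have "of_nat q powr z = exp (z * of_real (ln (real q)))"
    using assms by (simp add: powr_def)
  also have "z * of_real (ln (real q)) = of_real (Re z * ln (real q)) + \<i> * of_real (Im z * ln (real q))"
    by (simp add: complex_eq_iff)
  also have "exp \<dots> = of_real (exp (Re z * ln (real q))) * exp (\<i> * of_real (Im z * ln (real q)))"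
    by (simp only: exp_add exp_of_real)
  also have "exp (Re z * ln (real q)) = real q powr Re z"
    using assms by (simp add: powr_def mult.commute)
  finally show ?thesis .
qed

definition gs :: "nat \<Rightarrow> real \<Rightarrow> complex" where
  "gs J t = (\<Sum>j<J. exp (\<i> * of_real (real j * t))) / of_nat J"

lemma gs_norm: "norm (gs J t) \<le> 1"
proof (cases "J = 0")
  case False
  have "norm (\<Sum>j<J. exp (\<i> * of_real (real j * t))) \<le> (\<Sum>j<J. norm (exp (\<i> * of_real (real j * t))))"
    by (rule norm_sum)
  also have "\<dots> = real J" by (simp add: norm_exp_eq_Re)
  finally show ?thesis using False by (simp add: gs_def norm_divide divide_le_eq)
qed (simp add: gs_def)

lemma gs_zero: "J > 0 \<Longrightarrow> gs J 0 = 1"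
  by (simp add: gs_def)

lemma gs_lim:
  assumes ne: "exp (\<i> * of_real t) \<noteq> 1"
  shows "(\<lambda>J. gs J t) \<longlonglongrightarrow> 0"
proof -
  define z where "z = exp (\<i> * of_real t)"
  have zn: "norm z = 1" by (simp add: z_def norm_exp_eq_Re)
  have e: "exp (\<i> * of_real (real j * t)) = z ^ j" for j
    unfolding z_def by (subst exp_of_nat_mult[symmetric]) (simp add: algebra_simps)
  have g: "gs J t = ((z ^ J - 1) / (z - 1)) / of_nat J" for J
    unfolding gs_def e using ne by (simp add: geometric_sum z_def)
  have b: "norm ((z ^ J - 1) / (z - 1)) \<le> 2 / norm (z - 1)" for J
  proof -
    have "norm (z ^ J - 1) \<le> norm (z ^ J) + norm (1::complex)" by (rule norm_triangle_ineq4)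
    also have "\<dots> = 2" using zn by (simp add: norm_power)
    finally show ?thesis by (simp add: norm_divide divide_right_mono)
  qed
  show ?thesis
  proof (rule Lim_null_comparison)
    show "\<forall>\<^sub>F J in sequentially. norm (gs J t) \<le> (2 / norm (z - 1)) * (1 / real J)"
    proof (rule eventually_sequentiallyI[of 1])
      fix J :: nat assume "J \<ge> 1"
      have "norm (gs J t) = norm ((z ^ J - 1) / (z - 1)) / real J"
        by (simp add: g norm_divide norm_mult)
      also have "\<dots> \<le> (2 / norm (z - 1)) / real J"
        using b[of J] by (intro divide_right_mono) auto
      finally show "norm (gs J t) \<le> (2 / norm (z - 1)) * (1 / real J)" by simp
    qed
    show "(\<lambda>J. (2 / norm (z - 1)) * (1 / real J)) \<longlonglongrightarrow> 0"
      by (intro tendsto_mult_right_zero lim_const_over_n)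
  qed
qed

lemma exists_good_h:
  "\<exists>h::real. \<forall>p q::nat. p \<ge> 1 \<longrightarrow> q \<ge> 1 \<longrightarrow> p \<noteq> q \<longrightarrow>
      exp (\<i> * of_real (h * (ln (real p) - ln (real q)))) \<noteq> 1"
proof -
  define f where "f = (\<lambda>(p::nat, q::nat, n::int). 2 * real_of_int n * pi / (ln (real p) - ln (real q)))"
  have "countable (range f)" by simp
  have "range f \<noteq> UNIV"
  proof
    assume "range f = UNIV"
    with \<open>countable (range f)\<close> have "countable (UNIV :: real set)" by simp
    with uncountable_UNIV_real show False by simp
  qed
  then obtain h where h: "h \<notin> range f" by auto
  show ?thesis
  proof (intro exI allI impI notI)
    fix p q :: nat assume pq: "p \<ge> 1" "q \<ge> 1" "p \<noteq> q"
      and e: "exp (\<i> * of_real (h * (ln (real p) - ln (real q)))) = 1"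
    have lnne: "ln (real p) - ln (real q) \<noteq> 0" using pq by auto
    from e obtain n :: int where n: "h * (ln (real p) - ln (real q)) = of_int (2 * n) * pi"
      by (auto simp: exp_eq_1)
    hence "h = f (p, q, n)" using lnne by (simp add: f_def field_simps)
    with h show False by auto
  qed
qed

definition xp :: "real \<Rightarrow> real \<Rightarrow> nat \<Rightarrow> complex" where
  "xp \<sigma> h j = Complex \<sigma> (real j * h)"

definition W :: "real \<Rightarrow> real \<Rightarrow> nat \<Rightarrow> nat \<Rightarrow> nat \<Rightarrow> complex" where
  "W \<sigma> h m J j = of_real (real m powr \<sigma>) * exp (- (\<i> * of_real (real j * h * ln (real m)))) / of_nat J"

definition Yf :: "real \<Rightarrow> real \<Rightarrow> nat \<Rightarrow> nat \<Rightarrow> nat \<Rightarrow> complex" where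
  "Yf \<sigma> h m J q = (\<Sum>j<J. W \<sigma> h m J j * of_nat q powr (- cnj (xp \<sigma> h j)))"

lemma Yf_eq:
  assumes "q \<ge> 1"
  shows "Yf \<sigma> h m J q = of_real (real m powr \<sigma> * real q powr (-\<sigma>)) * gs J (h * (ln (real q) - ln (real m)))"
proof -
  have "W \<sigma> h m J j * of_nat q powr (- cnj (xp \<sigma> h j)) =
        of_real (real m powr \<sigma> * real q powr (-\<sigma>)) * exp (\<i> * of_real (real j * (h * (ln (real q) - ln (real m))))) / of_nat J"
    for j
  proof -
    have "of_nat q powr (- cnj (xp \<sigma> h j)) = of_real (real q powr (-\<sigma>)) * exp (\<i> * of_real (real j * h * ln (real q)))"
      using assms by (subst powr_nat_complex) (auto simp: xp_def)
    moreover have "exp (- (\<i> * of_real (real j * h * ln (real m)))) * exp (\<i> * of_real (real j * h * ln (real q)))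
        = exp (\<i> * of_real (real j * (h * (ln (real q) - ln (real m)))))"
      by (subst exp_add[symmetric]) (simp add: algebra_simps)
    ultimately show ?thesis unfolding W_def by (simp add: algebra_simps)
  qed
  hence "Yf \<sigma> h m J q = (\<Sum>j<J. of_real (real m powr \<sigma> * real q powr (-\<sigma>)) * exp (\<i> * of_real (real j * (h * (ln (real q) - ln (real m))))) / of_nat J)"
    unfolding Yf_def by simp
  also have "\<dots> = of_real (real m powr \<sigma> * real q powr (-\<sigma>)) * gs J (h * (ln (real q) - ln (real m)))"
    unfolding gs_def by (simp add: sum_divide_distrib sum_distrib_left)
  finally show ?thesis .
qed

lemma Yf_0: "Yf \<sigma> h m J 0 = 0"
  by (simp add: Yf_def)

lemma Yf_norm: "norm (Yf \<sigma> h m J q) \<le> real m powr \<sigma> * real q powr (-\<sigma>)"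
proof (cases "q = 0")
  case False
  hence "norm (Yf \<sigma> h m J q) = (real m powr \<sigma> * real q powr (-\<sigma>)) * norm (gs J (h * (ln (real q) - ln (real m))))"
    by (simp add: Yf_eq norm_mult)
  also have "\<dots> \<le> (real m powr \<sigma> * real q powr (-\<sigma>)) * 1"
    by (intro mult_left_mono gs_norm) auto
  finally show ?thesis by simp
qed (simp add: Yf_0)

lemma Yf_lim:
  assumes m: "m \<ge> 1"
    and h: "\<forall>p q::nat. p \<ge> 1 \<longrightarrow> q \<ge> 1 \<longrightarrow> p \<noteq> q \<longrightarrow>
      exp (\<i> * of_real (h * (ln (real p) - ln (real q)))) \<noteq> 1"
  shows "(\<lambda>J. Yf \<sigma> h m J q) \<longlonglongrightarrow> (if q = m then 1 else 0)"
proof (cases "q = 0")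
  case True thus ?thesis using m by (simp add: Yf_0)
next
  case False
  hence q: "q \<ge> 1" by simp
  show ?thesis
  proof (cases "q = m")
    case True
    have "\<forall>\<^sub>F J in sequentially. Yf \<sigma> h m J q = 1"
    proof (rule eventually_sequentiallyI[of 1])
      fix J :: nat assume "J \<ge> 1"
      thus "Yf \<sigma> h m J q = 1" using True q
        by (simp add: Yf_eq gs_zero powr_minus field_simps)
    qed
    thus ?thesis using True by (simp add: tendsto_eventually)
  next
    case False
    have "(\<lambda>J. of_real (real m powr \<sigma> * real q powr (-\<sigma>)) * gs J (h * (ln (real q) - ln (real m)))) \<longlonglongrightarrow>
          of_real (real m powr \<sigma> * real q powr (-\<sigma>)) * 0"
      using h q m False by (intro tendsto_intros gs_lim) auto
    thus ?thesis using False q by (simp add: Yf_eq)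
  qed
qed

lemma cnj_Yf:
  "cnj (Yf \<sigma> h m J p) = (\<Sum>i<J. cnj (W \<sigma> h m J i) * of_nat p powr (- xp \<sigma> h i))"
proof -
  have "cnj (of_nat p powr (- cnj (xp \<sigma> h i))) = of_nat p powr (- xp \<sigma> h i)" for i
    by (subst cnj_powr) auto
  thus ?thesis unfolding Yf_def by simp
qed

lemma Re_xp [simp]: "Re (xp \<sigma> h j) = \<sigma>"
  by (simp add: xp_def)

lemma sum1M: "(\<Sum>m=1..M. f m) = (\<Sum>k<M. f (Suc k))"
  by (induction M) (auto simp: atLeastAtMostSuc_conv add.commute)

lemma halfplane_cnj: "cnj u \<in> halfplane \<rho> \<longleftrightarrow> u \<in> halfplane \<rho>"
  by (simp add: halfplane_def)

lemma A_summable: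
  assumes K: "dirichlet_series_kernel a \<rho>" and s: "s \<in> halfplane \<rho>" and n: "n \<ge> 1"
  shows "summable (\<lambda>k. a (Suc k) n * of_nat (Suc k) powr (-s))"
proof -
  have "regularly_convergent (dterm a s s)" using K s unfolding dirichlet_series_kernel_def by auto
  hence "summable (\<lambda>k. dterm a s s (Suc k) n)" using n unfolding regularly_convergent_def by auto
  hence "summable (\<lambda>k. dterm a s s (Suc k) n * (1 / of_nat n powr (-s)))" by (rule summable_mult2)
  moreover have "of_nat n powr (-s) \<noteq> (0::complex)" using n by (simp add: powr_def)
  ultimately show ?thesis by (simp add: dterm_def)
qed

lemma kappa_sums:
  assumes K: "dirichlet_series_kernel a \<rho>" and s: "s \<in> halfplane \<rho>" and u: "u \<in> halfplane \<rho>"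
  shows "(\<lambda>k. analytic_symbol a \<rho> (Suc k) s * of_nat (Suc k) powr (- cnj u)) sums kappa a s u"
proof -
  define c where "c = dterm a s (cnj u)"
  have rc: "regularly_convergent c" using K s u halfplane_cnj[of u \<rho>]
    unfolding dirichlet_series_kernel_def c_def by auto
  then obtain L where L: "dconverges_to c L" unfolding regularly_convergent_def by auto
  have kL: "kappa a s u = L" unfolding kappa_def c_def[symmetric] using dsum_eq[OF L] .
  define col where "col n = analytic_symbol a \<rho> n s * of_nat n powr (- cnj u)" for n
  have colsums: "(\<lambda>k. c (Suc k) n) sums col n" if n: "n \<ge> 1" for n
  proof -
    have "(\<lambda>k. a (Suc k) n * of_nat (Suc k) powr (-s)) sums analytic_symbol a \<rho> n s"
      using A_summable[OF K s n] s by (simp add: analytic_symbol_def summable_sums)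
    hence "(\<lambda>k. a (Suc k) n * of_nat (Suc k) powr (-s) * of_nat n powr (- cnj u)) sums col n"
      unfolding col_def by (rule sums_mult2)
    thus ?thesis by (simp add: c_def dterm_def)
  qed
  have collim: "(\<lambda>M. \<Sum>m=1..M. c m n) \<longlonglongrightarrow> col n" if "n \<ge> 1" for n
  proof -
    have "(\<lambda>M. \<Sum>k<M. c (Suc k) n) \<longlonglongrightarrow> col n" using colsums[OF that] by (simp add: sums_def)
    thus ?thesis by (simp only: sum1M)
  qed
  have "(\<lambda>N. \<Sum>n=1..N. col n) \<longlonglongrightarrow> L" by (rule iter_lim[OF L collim])
  hence "(\<lambda>N. \<Sum>k<N. col (Suc k)) \<longlonglongrightarrow> L" by (simp only: sum1M)
  thus ?thesis unfolding sums_def kL col_def .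
qed

lemma summable_pow2: "summable (\<lambda>p. real (Suc p) powr (-2))"
proof -
  have "summable (\<lambda>p. real p powr (-2))" by (subst summable_real_powr_iff) auto
  thus ?thesis by (subst summable_Suc_iff[where f = "\<lambda>p. real p powr (-2)"])
qed

lemma norm_nat_powr: "norm (of_nat p powr (z::complex)) = real p powr Re z"
  by (subst norm_powr_real_powr) auto

lemma abound:
  assumes K: "dirichlet_series_kernel a \<rho>"
  shows "\<exists>B\<ge>0. \<forall>p q. p \<ge> 1 \<longrightarrow> q \<ge> 1 \<longrightarrow>
           norm (a p q) \<le> B * real p powr (\<rho>+1) * real q powr (\<rho>+1)"
proof -
  define s where "s = complex_of_real (\<rho>+1)"
  have s: "s \<in> halfplane \<rho>" by (simp add: s_def halfplane_def)
  have "regularly_convergent (dterm a s s)" using K s unfolding dirichlet_series_kernel_def by auto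
  then obtain B where B: "\<And>m n. norm (dterm a s s m n) \<le> B"
    using regconv_bounded[of "dterm a s s"] by (auto simp: dterm_def)
  have B0: "B \<ge> 0" using B[of 0 0] norm_ge_zero order_trans by blast
  have "norm (a p q) \<le> B * real p powr (\<rho>+1) * real q powr (\<rho>+1)" if "p \<ge> 1" "q \<ge> 1" for p q
  proof -
    have "norm (dterm a s s p q) = norm (a p q) * real p powr (-(\<rho>+1)) * real q powr (-(\<rho>+1))"
      by (simp add: dterm_def norm_mult norm_nat_powr s_def)
    hence "norm (a p q) * real p powr (-(\<rho>+1)) * real q powr (-(\<rho>+1)) \<le> B" using B by metis
    hence "norm (a p q) * real p powr (-(\<rho>+1)) * real q powr (-(\<rho>+1)) * (real p powr (\<rho>+1) * real q powr (\<rho>+1))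
            \<le> B * (real p powr (\<rho>+1) * real q powr (\<rho>+1))"
      by (rule mult_right_mono) auto
    moreover have "real p powr (-(\<rho>+1)) * real p powr (\<rho>+1) = 1" "real q powr (-(\<rho>+1)) * real q powr (\<rho>+1) = 1"
      using that by (simp_all add: powr_add[symmetric])
    ultimately show ?thesis by (simp add: algebra_simps)
      (metis (no_types, lifting) mult.assoc mult.left_commute mult_1_right)
  qed
  thus ?thesis using B0 by blast
qed

definition Pf :: "(nat \<Rightarrow> nat \<Rightarrow> complex) \<Rightarrow> real \<Rightarrow> real \<Rightarrow> nat \<Rightarrow> nat \<Rightarrow> nat \<Rightarrow> complex" where
  "Pf a \<rho> h m K q = (\<Sum>i<K. cnj (W (\<rho>+3) h m K i) * analytic_symbol a \<rho> q (xp (\<rho>+3) h i))"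

lemma xp_in: "xp (\<rho>+3) h i \<in> halfplane \<rho>"
  by (simp add: halfplane_def)

lemma Pf_sums:
  assumes K: "dirichlet_series_kernel a \<rho>" and q: "q \<ge> 1"
  shows "(\<lambda>p. a (Suc p) q * cnj (Yf (\<rho>+3) h m KK (Suc p))) sums Pf a \<rho> h m KK q"
proof -
  have "(\<lambda>p. cnj (W (\<rho>+3) h m KK i) * (a (Suc p) q * of_nat (Suc p) powr (- xp (\<rho>+3) h i))) sums
          (cnj (W (\<rho>+3) h m KK i) * analytic_symbol a \<rho> q (xp (\<rho>+3) h i))" for i
    using A_summable[OF K xp_in q, of h i]
    by (intro sums_mult) (simp add: analytic_symbol_def xp_in summable_sums)
  hence "(\<lambda>p. \<Sum>i<KK. cnj (W (\<rho>+3) h m KK i) * (a (Suc p) q * of_nat (Suc p) powr (- xp (\<rho>+3) h i))) sums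
          Pf a \<rho> h m KK q"
    unfolding Pf_def by (intro sums_sum) auto
  moreover have "(\<Sum>i<KK. cnj (W (\<rho>+3) h m KK i) * (a (Suc p) q * of_nat (Suc p) powr (- xp (\<rho>+3) h i)))
      = a (Suc p) q * cnj (Yf (\<rho>+3) h m KK (Suc p))" for p
    by (simp add: cnj_Yf sum_distrib_left algebra_simps)
  ultimately show ?thesis by simp
qed

lemma Pf_props:
  assumes K: "dirichlet_series_kernel a \<rho>" and m: "m \<ge> 1"
    and h: "\<forall>p q::nat. p \<ge> 1 \<longrightarrow> q \<ge> 1 \<longrightarrow> p \<noteq> q \<longrightarrow>
      exp (\<i> * of_real (h * (ln (real p) - ln (real q)))) \<noteq> 1"
  shows "\<exists>C. (\<forall>KK q. q \<ge> 1 \<longrightarrow> norm (Pf a \<rho> h m KK q) \<le> C * real q powr (\<rho>+1)) \<and>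
             (\<forall>q. q \<ge> 1 \<longrightarrow> (\<lambda>KK. Pf a \<rho> h m KK q) \<longlonglongrightarrow> a m q)"
proof -
  obtain B where B0: "B \<ge> 0" and B: "\<And>p q. p \<ge> 1 \<Longrightarrow> q \<ge> 1 \<Longrightarrow>
      norm (a p q) \<le> B * real p powr (\<rho>+1) * real q powr (\<rho>+1)"
    using abound[OF K] by blast
  define S2 where "S2 = (\<Sum>p. real (Suc p) powr (-2))"
  define C where "C = B * real m powr (\<rho>+3) * S2"
  have termb: "norm (a (Suc p) q * cnj (Yf (\<rho>+3) h m KK (Suc p))) \<le>
        (B * real q powr (\<rho>+1) * real m powr (\<rho>+3)) * real (Suc p) powr (-2)" if q: "q \<ge> 1" for p q KK
  proof -
    have "norm (a (Suc p) q * cnj (Yf (\<rho>+3) h m KK (Suc p))) =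
          norm (a (Suc p) q) * norm (Yf (\<rho>+3) h m KK (Suc p))" by (simp add: norm_mult)
    also have "\<dots> \<le> (B * real (Suc p) powr (\<rho>+1) * real q powr (\<rho>+1)) * (real m powr (\<rho>+3) * real (Suc p) powr (-(\<rho>+3)))"
      by (intro mult_mono B Yf_norm q) (auto intro!: mult_nonneg_nonneg B0)
    also have "\<dots> = (B * real q powr (\<rho>+1) * real m powr (\<rho>+3)) * (real (Suc p) powr (\<rho>+1) * real (Suc p) powr (-(\<rho>+3)))"
      by (simp add: algebra_simps)
    also have "real (Suc p) powr (\<rho>+1) * real (Suc p) powr (-(\<rho>+3)) = real (Suc p) powr (-2)"
      by (simp add: powr_add[symmetric])
    finally show ?thesis .
  qed
  have sumM: "summable (\<lambda>p. (B * real q powr (\<rho>+1) * real m powr (\<rho>+3)) * real (Suc p) powr (-2))" for q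
    by (intro summable_mult summable_pow2)
  have bnd: "norm (Pf a \<rho> h m KK q) \<le> C * real q powr (\<rho>+1)" if q: "q \<ge> 1" for KK q
  proof -
    have s: "(\<lambda>p. a (Suc p) q * cnj (Yf (\<rho>+3) h m KK (Suc p))) sums Pf a \<rho> h m KK q"
      by (rule Pf_sums[OF K q])
    have sn: "summable (\<lambda>p. norm (a (Suc p) q * cnj (Yf (\<rho>+3) h m KK (Suc p))))"
      by (rule summable_comparison_test[OF _ sumM]) (use termb[OF q] in auto)
    have "norm (Pf a \<rho> h m KK q) \<le> (\<Sum>p. norm (a (Suc p) q * cnj (Yf (\<rho>+3) h m KK (Suc p))))"
      using summable_norm[OF sn] sums_unique[OF s] by simp
    also have "\<dots> \<le> (\<Sum>p. (B * real q powr (\<rho>+1) * real m powr (\<rho>+3)) * real (Suc p) powr (-2))"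
      by (intro suminf_le termb q sn sumM)
    also have "\<dots> = C * real q powr (\<rho>+1)"
      unfolding C_def S2_def using summable_pow2 by (subst suminf_mult) (simp_all add: algebra_simps)
    finally show ?thesis .
  qed
  have lim: "(\<lambda>KK. Pf a \<rho> h m KK q) \<longlonglongrightarrow> a m q" if q: "q \<ge> 1" for q
  proof -
    have T: "((\<lambda>KK. suminf (\<lambda>p. a (Suc p) q * cnj (Yf (\<rho>+3) h m KK (Suc p)))) \<longlongrightarrow>
             suminf (\<lambda>p. a (Suc p) q * cnj (if Suc p = m then 1 else 0))) sequentially"
    proof (rule conjunct2[OF conjunct2[OF tannerys_theorem]])
      show "((\<lambda>KK. a (Suc p) q * cnj (Yf (\<rho>+3) h m KK (Suc p))) \<longlongrightarrow>
             a (Suc p) q * cnj (if Suc p = m then 1 else 0)) sequentially" for p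
        by (intro tendsto_intros Yf_lim m h)
      show "\<forall>\<^sub>F (p, KK) in at_top \<times>\<^sub>F sequentially. norm (a (Suc p) q * cnj (Yf (\<rho>+3) h m KK (Suc p))) \<le>
              (B * real q powr (\<rho>+1) * real m powr (\<rho>+3)) * real (Suc p) powr (-2)"
        using termb[OF q] by (intro always_eventually) auto
      show "summable (\<lambda>p. (B * real q powr (\<rho>+1) * real m powr (\<rho>+3)) * real (Suc p) powr (-2))"
        by (rule sumM)
    qed simp
    have "(\<lambda>p. a (Suc p) q * cnj (if Suc p = m then 1 else 0)) = (\<lambda>p. if p = m - 1 then a (Suc p) q else 0)"
      using m by (auto simp: fun_eq_iff)
    hence "suminf (\<lambda>p. a (Suc p) q * cnj (if Suc p = m then 1 else 0)) = a m q"
      using m sums_unique[OF sums_single[of "m-1" "\<lambda>p. a (Suc p) q"]] by simp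
    moreover have "(\<lambda>KK. suminf (\<lambda>p. a (Suc p) q * cnj (Yf (\<rho>+3) h m KK (Suc p)))) = (\<lambda>KK. Pf a \<rho> h m KK q)"
      using sums_unique[OF Pf_sums[OF K q]] by auto
    ultimately show ?thesis using T by simp
  qed
  show ?thesis using bnd lim by blast
qed

definition Bf :: "(nat \<Rightarrow> nat \<Rightarrow> complex) \<Rightarrow> real \<Rightarrow> real \<Rightarrow> nat \<Rightarrow> nat \<Rightarrow> nat \<Rightarrow> nat \<Rightarrow> complex" where
  "Bf a \<rho> h m n KK J = (\<Sum>i<KK. \<Sum>j<J. cnj (W (\<rho>+3) h m KK i) * kappa a (xp (\<rho>+3) h i) (xp (\<rho>+3) h j) * W (\<rho>+3) h n J j)"

lemma Bf_sums:
  assumes K: "dirichlet_series_kernel a \<rho>"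
  shows "(\<lambda>q. Pf a \<rho> h m KK (Suc q) * Yf (\<rho>+3) h n J (Suc q)) sums Bf a \<rho> h m n KK J"
proof -
  let ?x = "xp (\<rho>+3) h"
  have "(\<lambda>k. cnj (W (\<rho>+3) h m KK i) * (analytic_symbol a \<rho> (Suc k) (?x i) * of_nat (Suc k) powr (- cnj (?x j)))
          * W (\<rho>+3) h n J j) sums (cnj (W (\<rho>+3) h m KK i) * kappa a (?x i) (?x j) * W (\<rho>+3) h n J j)" for i j
    by (intro sums_mult sums_mult2 kappa_sums[OF K] xp_in)
  hence "(\<lambda>k. \<Sum>i<KK. \<Sum>j<J. cnj (W (\<rho>+3) h m KK i) * (analytic_symbol a \<rho> (Suc k) (?x i) * of_nat (Suc k) powr (- cnj (?x j)))
          * W (\<rho>+3) h n J j) sums Bf a \<rho> h m n KK J"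
    unfolding Bf_def by (intro sums_sum) auto
  moreover have "(\<Sum>i<KK. \<Sum>j<J. cnj (W (\<rho>+3) h m KK i) * (analytic_symbol a \<rho> (Suc k) (?x i) * of_nat (Suc k) powr (- cnj (?x j)))
          * W (\<rho>+3) h n J j) = Pf a \<rho> h m KK (Suc k) * Yf (\<rho>+3) h n J (Suc k)" for k
    unfolding Pf_def Yf_def sum_product by (intro sum.cong refl) (simp add: algebra_simps)
  ultimately show ?thesis by simp
qed

lemma Bf_lim:
  assumes K: "dirichlet_series_kernel a \<rho>" and m: "m \<ge> 1" and n: "n \<ge> 1"
    and h: "\<forall>p q::nat. p \<ge> 1 \<longrightarrow> q \<ge> 1 \<longrightarrow> p \<noteq> q \<longrightarrow>
      exp (\<i> * of_real (h * (ln (real p) - ln (real q)))) \<noteq> 1"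
  shows "((\<lambda>x. Bf a \<rho> h m n (fst x) (snd x)) \<longlongrightarrow> a m n) (sequentially \<times>\<^sub>F sequentially)"
proof -
  obtain C where Cb: "\<And>KK q. q \<ge> 1 \<Longrightarrow> norm (Pf a \<rho> h m KK q) \<le> C * real q powr (\<rho>+1)"
    and Cl: "\<And>q. q \<ge> 1 \<Longrightarrow> (\<lambda>KK. Pf a \<rho> h m KK q) \<longlonglongrightarrow> a m q"
    using Pf_props[OF K m h] by blast
  have C0: "C \<ge> 0" using Cb[of 1 0] by simp (meson norm_ge_zero order_trans)
  have termb: "norm (Pf a \<rho> h m KK (Suc q) * Yf (\<rho>+3) h n J (Suc q)) \<le> (C * real n powr (\<rho>+3)) * real (Suc q) powr (-2)"
    for KK J q
  proof -
    have "norm (Pf a \<rho> h m KK (Suc q) * Yf (\<rho>+3) h n J (Suc q)) =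
          norm (Pf a \<rho> h m KK (Suc q)) * norm (Yf (\<rho>+3) h n J (Suc q))" by (simp add: norm_mult)
    also have "\<dots> \<le> (C * real (Suc q) powr (\<rho>+1)) * (real n powr (\<rho>+3) * real (Suc q) powr (-(\<rho>+3)))"
      by (intro mult_mono Cb Yf_norm) (auto intro!: mult_nonneg_nonneg C0)
    also have "\<dots> = (C * real n powr (\<rho>+3)) * (real (Suc q) powr (\<rho>+1) * real (Suc q) powr (-(\<rho>+3)))"
      by (simp add: algebra_simps)
    also have "real (Suc q) powr (\<rho>+1) * real (Suc q) powr (-(\<rho>+3)) = real (Suc q) powr (-2)"
      by (simp add: powr_add[symmetric])
    finally show ?thesis .
  qed
  have T: "((\<lambda>x. suminf (\<lambda>q. Pf a \<rho> h m (fst x) (Suc q) * Yf (\<rho>+3) h n (snd x) (Suc q))) \<longlongrightarrow>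
             suminf (\<lambda>q. a m (Suc q) * (if Suc q = n then 1 else 0))) (sequentially \<times>\<^sub>F sequentially)"
  proof (rule conjunct2[OF conjunct2[OF tannerys_theorem]])
    show "((\<lambda>x. Pf a \<rho> h m (fst x) (Suc q) * Yf (\<rho>+3) h n (snd x) (Suc q)) \<longlongrightarrow>
             a m (Suc q) * (if Suc q = n then 1 else 0)) (sequentially \<times>\<^sub>F sequentially)" for q
    proof (rule tendsto_mult)
      show "((\<lambda>x. Pf a \<rho> h m (fst x) (Suc q)) \<longlongrightarrow> a m (Suc q)) (sequentially \<times>\<^sub>F sequentially)"
        using filterlim_compose[OF Cl[of "Suc q"] filterlim_fst[of sequentially sequentially]] by simp
      show "((\<lambda>x. Yf (\<rho>+3) h n (snd x) (Suc q)) \<longlongrightarrow> (if Suc q = n then 1 else 0)) (sequentially \<times>\<^sub>F sequentially)"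
        using filterlim_compose[OF Yf_lim[OF n h, of "\<rho>+3" "Suc q"] filterlim_snd[of sequentially sequentially]] by simp
    qed
    show "\<forall>\<^sub>F (q, x) in at_top \<times>\<^sub>F (sequentially \<times>\<^sub>F sequentially).
            norm (Pf a \<rho> h m (fst x) (Suc q) * Yf (\<rho>+3) h n (snd x) (Suc q)) \<le> (C * real n powr (\<rho>+3)) * real (Suc q) powr (-2)"
      using termb by (intro always_eventually) auto
    show "summable (\<lambda>q. (C * real n powr (\<rho>+3)) * real (Suc q) powr (-2))"
      by (intro summable_mult summable_pow2)
  qed (simp add: prod_filter_eq_bot)
  have "(\<lambda>q. a m (Suc q) * (if Suc q = n then 1 else 0)) = (\<lambda>q. if q = n - 1 then a m (Suc q) else 0)"
    using n by (auto simp: fun_eq_iff)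
  hence "suminf (\<lambda>q. a m (Suc q) * (if Suc q = n then 1 else 0)) = a m n"
    using n sums_unique[OF sums_single[of "n-1" "\<lambda>q. a m (Suc q)"]] by simp
  moreover have "(\<lambda>x. suminf (\<lambda>q. Pf a \<rho> h m (fst x) (Suc q) * Yf (\<rho>+3) h n (snd x) (Suc q))) =
                 (\<lambda>x. Bf a \<rho> h m n (fst x) (snd x))"
    using sums_unique[OF Bf_sums[OF K]] by auto
  ultimately show ?thesis using T by simp
qed

context
  fixes K :: "'x \<Rightarrow> 'x \<Rightarrow> complex" and X V and ip :: "('x \<Rightarrow> complex) \<Rightarrow> ('x \<Rightarrow> complex) \<Rightarrow> complex"
  assumes R: "rkhs K X V ip"
begin

lemma V_add: "f \<in> V \<Longrightarrow> g \<in> V \<Longrightarrow> (\<lambda>x. f x + g x) \<in> V"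
  using R unfolding rkhs_def by blast
lemma V_scale: "f \<in> V \<Longrightarrow> (\<lambda>x. c * f x) \<in> V"
  using R unfolding rkhs_def by blast
lemma V_zero: "(\<lambda>x. 0) \<in> V"
  using R unfolding rkhs_def by blast
lemma V_diff: "f \<in> V \<Longrightarrow> g \<in> V \<Longrightarrow> (\<lambda>x. f x - g x) \<in> V"
  using V_add[of f "\<lambda>x. (-1) * g x"] V_scale[of g "-1"] by simp
lemma V_sum: "(\<And>i. i < (J::nat) \<Longrightarrow> G i \<in> V) \<Longrightarrow> (\<lambda>x. \<Sum>i<J. c i * G i x) \<in> V"
proof (induction J)
  case 0 thus ?case using V_zero by simp
next
  case (Suc J)
  have "(\<lambda>x. (\<Sum>i<J. c i * G i x) + c J * G J x) \<in> V"
    using Suc by (intro V_add V_scale) auto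
  thus ?case by simp
qed

lemma ip_add1: "f \<in> V \<Longrightarrow> g \<in> V \<Longrightarrow> h \<in> V \<Longrightarrow> ip (\<lambda>x. f x + g x) h = ip f h + ip g h"
  using R unfolding rkhs_def by blast
lemma ip_scale1: "f \<in> V \<Longrightarrow> g \<in> V \<Longrightarrow> ip (\<lambda>x. c * f x) g = c * ip f g"
  using R unfolding rkhs_def by blast
lemma ip_sym: "f \<in> V \<Longrightarrow> g \<in> V \<Longrightarrow> ip g f = cnj (ip f g)"
  using R unfolding rkhs_def by blast
lemma ip_pos: "f \<in> V \<Longrightarrow> Re (ip f f) \<ge> 0"
  using R unfolding rkhs_def by blast
lemma ip_zero_imp: "f \<in> V \<Longrightarrow> ip f f = 0 \<Longrightarrow> f = (\<lambda>x. 0)"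
  using R unfolding rkhs_def by blast
lemma ip_real: "f \<in> V \<Longrightarrow> ip f f = of_real (Re (ip f f))"
  using ip_sym[of f f] by (simp add: complex_eq_iff)

lemma ip_add2: "f \<in> V \<Longrightarrow> g \<in> V \<Longrightarrow> h \<in> V \<Longrightarrow> ip h (\<lambda>x. f x + g x) = ip h f + ip h g"
  using ip_sym[of "\<lambda>x. f x + g x" h] ip_add1[of f g h] ip_sym[of f h] ip_sym[of g h] V_add[of f g]
  by simp
lemma ip_scale2: "f \<in> V \<Longrightarrow> g \<in> V \<Longrightarrow> ip g (\<lambda>x. c * f x) = cnj c * ip g f"
  using ip_sym[of "\<lambda>x. c * f x" g] ip_scale1[of f g c] ip_sym[of f g] V_scale[of f c]
  by simp
lemma ip_diff1: "f \<in> V \<Longrightarrow> g \<in> V \<Longrightarrow> h \<in> V \<Longrightarrow> ip (\<lambda>x. f x - g x) h = ip f h - ip g h"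
  using ip_add1[of f "\<lambda>x. (-1) * g x" h] ip_scale1[of g h "-1"] V_scale[of g "-1"] by simp
lemma ip_diff2: "f \<in> V \<Longrightarrow> g \<in> V \<Longrightarrow> h \<in> V \<Longrightarrow> ip h (\<lambda>x. f x - g x) = ip h f - ip h g"
  using ip_add2[of f "\<lambda>x. (-1) * g x" h] ip_scale2[of g h "-1"] V_scale[of g "-1"] by simp

lemma ip_sum1: "(\<And>i. i < (J::nat) \<Longrightarrow> G i \<in> V) \<Longrightarrow> g \<in> V \<Longrightarrow>
    ip (\<lambda>x. \<Sum>i<J. c i * G i x) g = (\<Sum>i<J. c i * ip (G i) g)"
proof (induction J)
  case 0
  have "ip (\<lambda>x. 0 * 0) g = 0 * ip (\<lambda>x. 0) g" using ip_scale1[OF V_zero 0(2), of 0] by simp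
  thus ?case by simp
next
  case (Suc J)
  have "ip (\<lambda>x. (\<Sum>i<J. c i * G i x) + c J * G J x) g = ip (\<lambda>x. \<Sum>i<J. c i * G i x) g + ip (\<lambda>x. c J * G J x) g"
    using Suc by (intro ip_add1 V_sum V_scale) auto
  also have "\<dots> = (\<Sum>i<J. c i * ip (G i) g) + c J * ip (G J) g"
    using Suc by (subst ip_scale1) auto
  finally show ?case by simp
qed

lemma ip_sum2: "(\<And>i. i < (J::nat) \<Longrightarrow> G i \<in> V) \<Longrightarrow> g \<in> V \<Longrightarrow>
    ip g (\<lambda>x. \<Sum>i<J. c i * G i x) = (\<Sum>i<J. cnj (c i) * ip g (G i))"
proof -
  assume G: "\<And>i. i < J \<Longrightarrow> G i \<in> V" and g: "g \<in> V"
  have "ip g (\<lambda>x. \<Sum>i<J. c i * G i x) = cnj (ip (\<lambda>x. \<Sum>i<J. c i * G i x) g)"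
    using G g V_sum by (intro ip_sym) auto
  also have "\<dots> = (\<Sum>i<J. cnj (c i) * cnj (ip (G i) g))" using G g by (simp add: ip_sum1)
  also have "\<dots> = (\<Sum>i<J. cnj (c i) * ip g (G i))" using G g by (intro sum.cong refl) (simp add: ip_sym[OF G g])
  finally show ?thesis .
qed

lemma cauchy_schwarz:
  assumes f: "f \<in> V" and g: "g \<in> V"
  shows "norm (ip f g) ^ 2 \<le> Re (ip f f) * Re (ip g g)"
proof (cases "ip g g = 0")
  case True
  hence "g = (\<lambda>x. 0)" using ip_zero_imp g by blast
  hence "ip f g = ip f (\<lambda>x. 0 * g x)" by simp
  also have "\<dots> = 0" using ip_scale2[OF g f, of 0] by simp
  finally show ?thesis using True by simp
next
  case False
  define G where "G = Re (ip g g)"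
  have gg: "ip g g = of_real G" using ip_real[OF g] by (simp add: G_def)
  have "G \<ge> 0" using ip_pos[OF g] unfolding G_def .
  moreover have "G \<noteq> 0" using False gg by auto
  ultimately have G0: "G > 0" by simp
  define t where "t = ip f g / of_real G"
  have tg: "(\<lambda>x. t * g x) \<in> V" using g by (rule V_scale)
  have "ip (\<lambda>x. f x - t * g x) (\<lambda>x. f x - t * g x) =
        ip f f - ip f (\<lambda>x. t * g x) - (ip (\<lambda>x. t * g x) f - ip (\<lambda>x. t * g x) (\<lambda>x. t * g x))"
    by (simp only: ip_diff1[OF f tg V_diff[OF f tg]] ip_diff2[OF f tg f] ip_diff2[OF f tg tg])
  also have "\<dots> = ip f f - cnj t * ip f g - t * ip g f + t * (cnj t * ip g g)"
    by (simp only: ip_scale2[OF g f] ip_scale1[OF g f] ip_scale1[OF g tg] ip_scale2[OF g g]) simp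
  also have "ip g f = cnj (ip f g)" using f g by (rule ip_sym)
  also have nz: "cnj (ip f g) * ip f g = of_real (norm (ip f g) ^ 2)"
    by (metis complex_norm_square mult.commute)
  have e1: "cnj t * ip f g = of_real (norm (ip f g) ^ 2 / G)"
    unfolding t_def using nz by (simp add: field_simps)
  have e2: "t * cnj (ip f g) = of_real (norm (ip f g) ^ 2 / G)"
    unfolding t_def using nz G0 by (simp add: field_simps)
  have e3: "t * (cnj t * ip g g) = of_real (norm (ip f g) ^ 2 / G)"
    unfolding t_def gg using nz G0 by (simp add: field_simps power2_eq_square)
  have "ip f f - cnj t * ip f g - t * cnj (ip f g) + t * (cnj t * ip g g) =
             ip f f - of_real (norm (ip f g) ^ 2 / G)"
    unfolding e1 e2 e3 by simp
  finally have "Re (ip f f) - norm (ip f g) ^ 2 / G \<ge> 0"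
    using ip_pos[OF V_diff[OF f tg]] by simp
  hence "norm (ip f g) ^ 2 / G \<le> Re (ip f f)" by simp
  thus ?thesis using G0 by (simp add: G_def divide_le_eq mult.commute)
qed

lemma sq_tendsto0: "(\<lambda>J. norm (z J) ^ 2) \<longlonglongrightarrow> 0 \<Longrightarrow> (z :: nat \<Rightarrow> complex) \<longlonglongrightarrow> 0"
proof -
  assume "(\<lambda>J. norm (z J) ^ 2) \<longlonglongrightarrow> 0"
  hence "(\<lambda>J. sqrt (norm (z J) ^ 2)) \<longlonglongrightarrow> sqrt 0" by (rule tendsto_real_sqrt)
  hence "(\<lambda>J. norm (z J)) \<longlonglongrightarrow> 0" by simp
  thus ?thesis by (rule tendsto_norm_zero_cancel)
qed

lemma ip_cont:
  assumes F: "\<And>J. F J \<in> V" and G: "\<And>J. G J \<in> V" and f: "f \<in> V" and g: "g \<in> V"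
    and DF: "(\<lambda>J. Re (ip (\<lambda>x. F J x - f x) (\<lambda>x. F J x - f x))) \<longlonglongrightarrow> 0"
    and DG: "(\<lambda>J. Re (ip (\<lambda>x. G J x - g x) (\<lambda>x. G J x - g x))) \<longlonglongrightarrow> 0"
    and EG: "(\<lambda>J. Re (ip (G J) (G J))) \<longlonglongrightarrow> E"
  shows "(\<lambda>J. ip (F J) (G J)) \<longlonglongrightarrow> ip f g"
proof -
  have eq: "ip (F J) (G J) - ip f g = ip (\<lambda>x. F J x - f x) (G J) + ip f (\<lambda>x. G J x - g x)" for J
    using F G f g by (simp add: ip_diff1 ip_diff2)
  have t1: "(\<lambda>J. ip (\<lambda>x. F J x - f x) (G J)) \<longlonglongrightarrow> 0"
  proof (rule sq_tendsto0, rule Lim_null_comparison)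
    show "\<forall>\<^sub>F J in sequentially. norm (norm (ip (\<lambda>x. F J x - f x) (G J)) ^ 2) \<le>
          Re (ip (\<lambda>x. F J x - f x) (\<lambda>x. F J x - f x)) * Re (ip (G J) (G J))"
      using cauchy_schwarz[OF V_diff[OF F f] G] by (intro always_eventually) auto
    show "(\<lambda>J. Re (ip (\<lambda>x. F J x - f x) (\<lambda>x. F J x - f x)) * Re (ip (G J) (G J))) \<longlonglongrightarrow> 0"
      using tendsto_mult[OF DF EG] by simp
  qed
  have t2: "(\<lambda>J. ip f (\<lambda>x. G J x - g x)) \<longlonglongrightarrow> 0"
  proof (rule sq_tendsto0, rule Lim_null_comparison)
    show "\<forall>\<^sub>F J in sequentially. norm (norm (ip f (\<lambda>x. G J x - g x)) ^ 2) \<le>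
          Re (ip f f) * Re (ip (\<lambda>x. G J x - g x) (\<lambda>x. G J x - g x))"
      using cauchy_schwarz[OF f V_diff[OF G g]] by (intro always_eventually) auto
    show "(\<lambda>J. Re (ip f f) * Re (ip (\<lambda>x. G J x - g x) (\<lambda>x. G J x - g x))) \<longlonglongrightarrow> 0"
      using tendsto_mult[OF tendsto_const DG] by simp
  qed
  have "(\<lambda>J. ip (F J) (G J) - ip f g) \<longlonglongrightarrow> 0"
    unfolding eq using tendsto_add[OF t1 t2] by simp
  thus ?thesis by (simp add: LIM_zero_iff)
qed

lemma reproducing:
  assumes "t \<in> X" "f \<in> V"
  shows "(\<lambda>x. if x \<in> X then K x t else 0) \<in> V" "ip f (\<lambda>x. if x \<in> X then K x t else 0) = f t"
  using R assms unfolding rkhs_def by blast+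

lemma pointwise_conv:
  assumes F: "\<And>J. F J \<in> V" and f: "f \<in> V" and s: "s \<in> X"
    and DF: "(\<lambda>J. Re (ip (\<lambda>x. F J x - f x) (\<lambda>x. F J x - f x))) \<longlonglongrightarrow> 0"
  shows "(\<lambda>J. F J s) \<longlonglongrightarrow> f s"
proof -
  define k where "k = (\<lambda>x. if x \<in> X then K x s else 0)"
  have k: "k \<in> V" unfolding k_def using reproducing(1)[OF s f] .
  have e: "F J s - f s = ip (\<lambda>x. F J x - f x) k" for J
    unfolding k_def using reproducing(2)[OF s V_diff[OF F f]] by simp
  have "(\<lambda>J. F J s - f s) \<longlonglongrightarrow> 0"
  proof (rule sq_tendsto0, rule Lim_null_comparison)
    show "\<forall>\<^sub>F J in sequentially. norm (norm (F J s - f s) ^ 2) \<le>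
          Re (ip (\<lambda>x. F J x - f x) (\<lambda>x. F J x - f x)) * Re (ip k k)"
      unfolding e using cauchy_schwarz[OF V_diff[OF F f] k] by (intro always_eventually) auto
    show "(\<lambda>J. Re (ip (\<lambda>x. F J x - f x) (\<lambda>x. F J x - f x)) * Re (ip k k)) \<longlonglongrightarrow> 0"
      using tendsto_mult[OF DF tendsto_const] by simp
  qed
  thus ?thesis by (simp add: LIM_zero_iff)
qed

end

lemma cnj_nat_powr [simp]: "cnj (of_nat m powr z) = of_nat m powr cnj z"
  by (subst cnj_powr) auto

lemma kappa_diag:
  assumes K: "dirichlet_series_kernel a \<rho>" and s: "s \<in> halfplane \<rho>" and u: "u \<in> halfplane \<rho>"
  shows "(\<lambda>M. dpartial (dterm a s (cnj u)) M M) \<longlonglongrightarrow> kappa a s u"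
proof -
  have "regularly_convergent (dterm a s (cnj u))" using K s u halfplane_cnj[of u \<rho>]
    unfolding dirichlet_series_kernel_def by auto
  then obtain L where L: "dconverges_to (dterm a s (cnj u)) L" unfolding regularly_convergent_def by auto
  have "kappa a s u = L" unfolding kappa_def using dsum_eq[OF L] .
  thus ?thesis using diag_lim[OF L] by simp
qed

lemma dpartial_herm:
  assumes H: "\<And>m n. m \<ge> 1 \<Longrightarrow> n \<ge> 1 \<Longrightarrow> a m n = cnj (a n m)"
  shows "dpartial (dterm a s (cnj u)) M M = cnj (dpartial (dterm a u (cnj s)) M M)"
proof -
  have "cnj (dpartial (dterm a u (cnj s)) M M) = (\<Sum>m=1..M. \<Sum>n=1..M. a n m * of_nat n powr (- s) * of_nat m powr (- cnj u))"
    unfolding dpartial_def dterm_def cnj_sum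
    by (intro sum.cong refl) (simp add: H[symmetric])
  also have "\<dots> = dpartial (dterm a s (cnj u)) M M"
    unfolding dpartial_def dterm_def by (subst sum.swap) simp
  finally show ?thesis by simp
qed

lemma quad_partial:
  "(\<Sum>i<N. \<Sum>j<N. cnj (c i) * dpartial (dterm a (x i) (cnj (x j))) M M * c j) =
   (\<Sum>m=1..M. \<Sum>n=1..M. cnj (\<Sum>j<N. c j * of_nat m powr (- cnj (x j))) * a m n *
        (\<Sum>j<N. c j * of_nat n powr (- cnj (x j))))"
proof -
  have "(\<Sum>i<N. \<Sum>j<N. cnj (c i) * dpartial (dterm a (x i) (cnj (x j))) M M * c j) =
        (\<Sum>i<N. \<Sum>j<N. \<Sum>m=1..M. \<Sum>n=1..M. cnj (c i) * of_nat m powr (- x i) * a m n * (c j * of_nat n powr (- cnj (x j))))"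
    unfolding dpartial_def dterm_def sum_distrib_left sum_distrib_right
    by (intro sum.cong refl) (simp add: algebra_simps)
  also have "\<dots> = (\<Sum>m=1..M. \<Sum>n=1..M. \<Sum>i<N. \<Sum>j<N. cnj (c i) * of_nat m powr (- x i) * a m n * (c j * of_nat n powr (- cnj (x j))))"
    by (subst sum.swap, subst (2) sum.swap, subst (3) sum.swap) (rule sum.cong[OF refl], subst sum.swap, rule refl)
  also have "\<dots> = (\<Sum>m=1..M. \<Sum>n=1..M. cnj (\<Sum>j<N. c j * of_nat m powr (- cnj (x j))) * a m n *
        (\<Sum>j<N. c j * of_nat n powr (- cnj (x j))))"
    unfolding cnj_sum sum_distrib_left sum_distrib_right
    by (simp add: algebra_simps) (rule sum.cong[OF refl], rule sum.cong[OF refl], rule sum.swap)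
  finally show ?thesis .
qed

lemma psd_kernelD:
  assumes "psd_kernel K X" "\<forall>i<N. x i \<in> X"
  shows "(\<forall>i<N. \<forall>j<N. K (x i) (x j) = cnj (K (x j) (x i))) \<and>
        (\<forall>c :: nat \<Rightarrow> complex.
           Im (\<Sum>i<N. \<Sum>j<N. cnj (c i) * K (x i) (x j) * c j) = 0 \<and>
           Re (\<Sum>i<N. \<Sum>j<N. cnj (c i) * K (x i) (x j) * c j) \<ge> 0)"
proof -
  have "\<forall>N x. (\<forall>i<N. x i \<in> X) \<longrightarrow>
        (\<forall>i<N. \<forall>j<N. K (x i) (x j) = cnj (K (x j) (x i))) \<and>
        (\<forall>c :: nat \<Rightarrow> complex.
           Im (\<Sum>i<N. \<Sum>j<N. cnj (c i) * K (x i) (x j) * c j) = 0 \<and>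
           Re (\<Sum>i<N. \<Sum>j<N. cnj (c i) * K (x i) (x j) * c j) \<ge> 0)"
    using assms(1) unfolding psd_kernel_def .
  from mp[OF this[THEN spec[of _ N], THEN spec[of _ x]] assms(2)] show ?thesis .
qed

lemma psd_herm:
  assumes "psd_kernel a {1..}" "m \<ge> 1" "n \<ge> 1"
  shows "a m n = cnj (a n m)"
proof -
  define x where "x = (\<lambda>i::nat. if i = 0 then m else n)"
  have "\<forall>i<2. x i \<in> {1..}" using assms by (auto simp: x_def)
  hence "\<forall>i<2. \<forall>j<2. a (x i) (x j) = cnj (a (x j) (x i))" using psd_kernelD[OF assms(1)] by blast
  hence "a (x 0) (x 1) = cnj (a (x 1) (x 0))" by (metis lessI pos2 one_less_numeral_iff semiring_norm(76))
  thus ?thesis by (simp add: x_def)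
qed

lemma psd_quad:
  assumes "psd_kernel a {1..}"
  shows "Im (\<Sum>i<M. \<Sum>j<M. cnj (c i) * a (Suc i) (Suc j) * c j) = 0 \<and>
         Re (\<Sum>i<M. \<Sum>j<M. cnj (c i) * a (Suc i) (Suc j) * c j) \<ge> 0"
proof -
  have "\<forall>i<M. Suc i \<in> {1..}" by auto
  from psd_kernelD[OF assms this] show ?thesis by blast
qed

lemma partA_herm:
  assumes K: "dirichlet_series_kernel a \<rho>" and P: "psd_kernel a {1..}"
    and xi: "xi \<in> halfplane \<rho>" and xj: "xj \<in> halfplane \<rho>"
  shows "kappa a xi xj = cnj (kappa a xj xi)"
proof -
  have H: "\<And>m n. m \<ge> 1 \<Longrightarrow> n \<ge> 1 \<Longrightarrow> a m n = cnj (a n m)" using psd_herm[OF P] by blast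
  have l1: "(\<lambda>M. dpartial (dterm a xi (cnj xj)) M M) \<longlonglongrightarrow> kappa a xi xj"
    using kappa_diag[OF K xi xj] .
  have "(\<lambda>M. cnj (dpartial (dterm a xj (cnj xi)) M M)) \<longlonglongrightarrow> cnj (kappa a xj xi)"
    using kappa_diag[OF K xj xi] by (intro tendsto_cnj)
  moreover have "(\<lambda>M. cnj (dpartial (dterm a xj (cnj xi)) M M)) = (\<lambda>M. dpartial (dterm a xi (cnj xj)) M M)"
    by (rule ext, rule dpartial_herm[OF H, symmetric])
  ultimately have l2: "(\<lambda>M. dpartial (dterm a xi (cnj xj)) M M) \<longlonglongrightarrow> cnj (kappa a xj xi)"
    by simp
  show ?thesis using LIMSEQ_unique[OF l1 l2] .
qed

lemma partA_quad:
  assumes K: "dirichlet_series_kernel a \<rho>" and P: "psd_kernel a {1..}"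
    and x: "\<forall>i<N. x i \<in> halfplane \<rho>"
  shows "Im (\<Sum>i<N. \<Sum>j<N. cnj (c i) * kappa a (x i) (x j) * c j) = 0 \<and>
         Re (\<Sum>i<N. \<Sum>j<N. cnj (c i) * kappa a (x i) (x j) * c j) \<ge> 0"
proof -
  define Q where "Q = (\<Sum>i<N. \<Sum>j<N. cnj (c i) * kappa a (x i) (x j) * c j)"
  define QM where "QM M = (\<Sum>i<N. \<Sum>j<N. cnj (c i) * dpartial (dterm a (x i) (cnj (x j))) M M * c j)" for M
  have lim: "QM \<longlonglongrightarrow> Q" unfolding QM_def Q_def
    using x by (intro tendsto_sum tendsto_mult tendsto_const kappa_diag[OF K]) auto
  define Yv where "Yv n = (\<Sum>j<N. c j * of_nat n powr (- cnj (x j)))" for n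
  have QM_eq: "QM M = (\<Sum>i<M. \<Sum>j<M. cnj (Yv (Suc i)) * a (Suc i) (Suc j) * Yv (Suc j))" for M
    unfolding QM_def quad_partial Yv_def[symmetric] by (simp only: sum1M)
  have Im0: "Im (QM M) = 0" and Re0: "Re (QM M) \<ge> 0" for M
    unfolding QM_eq using psd_quad[OF P, of "\<lambda>i. Yv (Suc i)" M] by auto
  have "(\<lambda>M. Im (QM M)) \<longlonglongrightarrow> Im Q" by (intro tendsto_intros lim)
  hence "(\<lambda>M. 0) \<longlonglongrightarrow> Im Q" using Im0 by simp
  hence "Im Q = 0" by (simp add: LIMSEQ_const_iff)
  moreover have "(\<lambda>M. Re (QM M)) \<longlonglongrightarrow> Re Q" by (intro tendsto_intros lim)
  hence "Re Q \<ge> 0" by (rule LIMSEQ_le_const) (use Re0 in auto)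
  ultimately show ?thesis unfolding Q_def by blast
qed

lemma partA:
  assumes K: "dirichlet_series_kernel a \<rho>" and P: "psd_kernel a {1..}"
  shows "psd_kernel (kappa a) (halfplane \<rho>)"
  unfolding psd_kernel_def
  using partA_herm[OF K P] partA_quad[OF K P] by blast

lemma Bf_diag:
  assumes K: "dirichlet_series_kernel a \<rho>" and m: "m \<ge> 1" and n: "n \<ge> 1"
    and h: "\<forall>p q::nat. p \<ge> 1 \<longrightarrow> q \<ge> 1 \<longrightarrow> p \<noteq> q \<longrightarrow>
      exp (\<i> * of_real (h * (ln (real p) - ln (real q)))) \<noteq> 1"
  shows "(\<lambda>J. Bf a \<rho> h m n J J) \<longlonglongrightarrow> a m n"
proof -
  have "filterlim (\<lambda>J. (J, J)) (sequentially \<times>\<^sub>F sequentially) sequentially"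
    by (intro filterlim_Pair filterlim_ident)
  from filterlim_compose[OF Bf_lim[OF K m n h] this] show ?thesis by simp
qed

lemma Bf_herm:
  assumes P: "psd_kernel (kappa a) (halfplane \<rho>)"
  shows "Bf a \<rho> h m n J J = cnj (Bf a \<rho> h n m J J)"
proof -
  let ?x = "xp (\<rho>+3) h"
  have xin: "\<forall>i<J. ?x i \<in> halfplane \<rho>" using xp_in by blast
  have H: "\<And>i j. i < J \<Longrightarrow> j < J \<Longrightarrow> kappa a (?x i) (?x j) = cnj (kappa a (?x j) (?x i))"
    using psd_kernelD[OF P xin] by blast
  have H': "\<And>i j. i < J \<Longrightarrow> j < J \<Longrightarrow> cnj (kappa a (?x i) (?x j)) = kappa a (?x j) (?x i)"
    using H by metis
  have "cnj (Bf a \<rho> h n m J J) = (\<Sum>i<J. \<Sum>j<J. W (\<rho>+3) h n J i * kappa a (?x j) (?x i) * cnj (W (\<rho>+3) h m J j))"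
    unfolding Bf_def cnj_sum by (intro sum.cong refl) (simp add: H')
  also have "\<dots> = Bf a \<rho> h m n J J"
    unfolding Bf_def by (subst sum.swap) (simp add: algebra_simps)
  finally show ?thesis by simp
qed

lemma Bf_quad:
  "(\<Sum>i<N. \<Sum>j<N. cnj (c i) * Bf a \<rho> h (p i) (p j) J J * c j) =
   (\<Sum>k<J. \<Sum>l<J. cnj (\<Sum>i<N. c i * W (\<rho>+3) h (p i) J k) * kappa a (xp (\<rho>+3) h k) (xp (\<rho>+3) h l) *
        (\<Sum>i<N. c i * W (\<rho>+3) h (p i) J l))"
proof -
  let ?x = "xp (\<rho>+3) h"
  have "(\<Sum>i<N. \<Sum>j<N. cnj (c i) * Bf a \<rho> h (p i) (p j) J J * c j) =
        (\<Sum>i<N. \<Sum>j<N. \<Sum>k<J. \<Sum>l<J. cnj (c i) * cnj (W (\<rho>+3) h (p i) J k) * kappa a (?x k) (?x l) * (c j * W (\<rho>+3) h (p j) J l))"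
    unfolding Bf_def sum_distrib_left sum_distrib_right
    by (intro sum.cong refl) (simp add: algebra_simps)
  also have "\<dots> = (\<Sum>k<J. \<Sum>l<J. \<Sum>i<N. \<Sum>j<N. cnj (c i) * cnj (W (\<rho>+3) h (p i) J k) * kappa a (?x k) (?x l) * (c j * W (\<rho>+3) h (p j) J l))"
    by (subst sum.swap, subst (2) sum.swap, subst (3) sum.swap) (rule sum.cong[OF refl], subst sum.swap, rule refl)
  also have "\<dots> = (\<Sum>k<J. \<Sum>l<J. cnj (\<Sum>i<N. c i * W (\<rho>+3) h (p i) J k) * kappa a (?x k) (?x l) *
        (\<Sum>i<N. c i * W (\<rho>+3) h (p i) J l))"
    unfolding cnj_sum sum_distrib_left sum_distrib_right
    by (simp add: algebra_simps) (rule sum.cong[OF refl], rule sum.cong[OF refl], rule sum.swap)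
  finally show ?thesis .
qed

lemma partB:
  assumes K: "dirichlet_series_kernel a \<rho>" and P: "psd_kernel (kappa a) (halfplane \<rho>)"
  shows "psd_kernel a {1..}"
proof -
  obtain h where h: "\<forall>p q::nat. p \<ge> 1 \<longrightarrow> q \<ge> 1 \<longrightarrow> p \<noteq> q \<longrightarrow>
      exp (\<i> * of_real (h * (ln (real p) - ln (real q)))) \<noteq> 1"
    using exists_good_h by blast
  have herm: "a m n = cnj (a n m)" if m: "m \<ge> 1" and n: "n \<ge> 1" for m n
  proof -
    have l1: "(\<lambda>J. Bf a \<rho> h m n J J) \<longlonglongrightarrow> a m n" by (rule Bf_diag[OF K m n h])
    have "(\<lambda>J. cnj (Bf a \<rho> h n m J J)) \<longlonglongrightarrow> cnj (a n m)" by (intro tendsto_cnj Bf_diag[OF K n m h])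
    hence l2: "(\<lambda>J. Bf a \<rho> h m n J J) \<longlonglongrightarrow> cnj (a n m)"
      by (simp only: Bf_herm[OF P, of h m n, symmetric])
    show ?thesis using LIMSEQ_unique[OF l1 l2] .
  qed
  have quad: "Im (\<Sum>i<N. \<Sum>j<N. cnj (c i) * a (p i) (p j) * c j) = 0 \<and>
              Re (\<Sum>i<N. \<Sum>j<N. cnj (c i) * a (p i) (p j) * c j) \<ge> 0"
    if p: "\<forall>i<N. p i \<in> {1..}" for N p c
  proof -
    define Q where "Q = (\<Sum>i<N. \<Sum>j<N. cnj (c i) * a (p i) (p j) * c j)"
    define QJ where "QJ J = (\<Sum>i<N. \<Sum>j<N. cnj (c i) * Bf a \<rho> h (p i) (p j) J J * c j)" for J
    have lim: "QJ \<longlonglongrightarrow> Q" unfolding QJ_def Q_def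
      using p by (intro tendsto_sum tendsto_mult tendsto_const Bf_diag[OF K _ _ h]) auto
    have xin: "\<forall>i<J. xp (\<rho>+3) h i \<in> halfplane \<rho>" for J using xp_in by blast
    have QQ: "Im (QJ J) = 0 \<and> Re (QJ J) \<ge> 0" for J
      unfolding QJ_def Bf_quad
      using spec[OF conjunct2[OF psd_kernelD[OF P xin[of J]]], of "\<lambda>k. \<Sum>i<N. c i * W (\<rho>+3) h (p i) J k"]
      by blast
    have Im0: "Im (QJ J) = 0" for J using QQ by blast
    have Re0: "Re (QJ J) \<ge> 0" for J using QQ by blast
    have "(\<lambda>J. Im (QJ J)) \<longlonglongrightarrow> Im Q" by (intro tendsto_intros lim)
    hence "(\<lambda>J. 0) \<longlonglongrightarrow> Im Q" using Im0 by simp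
    hence "Im Q = 0" by (simp add: LIMSEQ_const_iff)
    moreover have "(\<lambda>J. Re (QJ J)) \<longlonglongrightarrow> Re Q" by (intro tendsto_intros lim)
    hence "Re Q \<ge> 0" by (rule LIMSEQ_le_const) (use Re0 in auto)
    ultimately show ?thesis unfolding Q_def by blast
  qed
  show ?thesis unfolding psd_kernel_def
  proof (intro allI impI conjI)
    fix N p i j assume p: "\<forall>i<N. p i \<in> ({1..} :: nat set)" and ij: "i < N" "j < N"
    have "p i \<ge> 1" "p j \<ge> 1" using p ij by auto
    thus "a (p i) (p j) = cnj (a (p j) (p i))" by (rule herm)
  next
    fix N p c assume p: "\<forall>i<N. p i \<in> ({1..} :: nat set)"
    thus "Im (\<Sum>i<N. \<Sum>j<N. cnj (c i) * a (p i) (p j) * c j) = 0" using quad[OF p] by blast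
  next
    fix N p c assume p: "\<forall>i<N. p i \<in> ({1..} :: nat set)"
    thus "Re (\<Sum>i<N. \<Sum>j<N. cnj (c i) * a (p i) (p j) * c j) \<ge> 0" using quad[OF p] by blast
  qed
qed

definition ks :: "(nat \<Rightarrow> nat \<Rightarrow> complex) \<Rightarrow> real \<Rightarrow> real \<Rightarrow> nat \<Rightarrow> complex \<Rightarrow> complex" where
  "ks a \<rho> h j = (\<lambda>x. if x \<in> halfplane \<rho> then kappa a x (xp (\<rho>+3) h j) else 0)"

definition Ff :: "(nat \<Rightarrow> nat \<Rightarrow> complex) \<Rightarrow> real \<Rightarrow> real \<Rightarrow> nat \<Rightarrow> nat \<Rightarrow> complex \<Rightarrow> complex" where
  "Ff a \<rho> h n J = (\<lambda>x. \<Sum>j<J. W (\<rho>+3) h n J j * ks a \<rho> h j x)"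

lemma Bf_lim2:
  assumes K: "dirichlet_series_kernel a \<rho>" and m: "m \<ge> 1" and n: "n \<ge> 1"
    and h: "\<forall>p q::nat. p \<ge> 1 \<longrightarrow> q \<ge> 1 \<longrightarrow> p \<noteq> q \<longrightarrow>
      exp (\<i> * of_real (h * (ln (real p) - ln (real q)))) \<noteq> 1"
    and g1: "filterlim g1 sequentially F" and g2: "filterlim g2 sequentially F"
  shows "((\<lambda>x. Bf a \<rho> h m n (g1 x) (g2 x)) \<longlongrightarrow> a m n) F"
proof -
  have "filterlim (\<lambda>x. (g1 x, g2 x)) (sequentially \<times>\<^sub>F sequentially) F"
    by (intro filterlim_Pair g1 g2)
  from filterlim_compose[OF Bf_lim[OF K m n h] this] show ?thesis by simp
qed

lemma Ff_sums:
  assumes K: "dirichlet_series_kernel a \<rho>" and s: "s \<in> halfplane \<rho>"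
  shows "(\<lambda>q. analytic_symbol a \<rho> (Suc q) s * Yf (\<rho>+3) h n J (Suc q)) sums Ff a \<rho> h n J s"
proof -
  have "(\<lambda>q. W (\<rho>+3) h n J j * (analytic_symbol a \<rho> (Suc q) s * of_nat (Suc q) powr (- cnj (xp (\<rho>+3) h j))))
          sums (W (\<rho>+3) h n J j * ks a \<rho> h j s)" for j
    using sums_mult[OF kappa_sums[OF K s xp_in[of \<rho> h j]], of "W (\<rho>+3) h n J j"] s by (simp add: ks_def)
  hence "(\<lambda>q. \<Sum>j<J. W (\<rho>+3) h n J j * (analytic_symbol a \<rho> (Suc q) s * of_nat (Suc q) powr (- cnj (xp (\<rho>+3) h j))))
          sums Ff a \<rho> h n J s"
    unfolding Ff_def by (intro sums_sum) auto
  moreover have "(\<Sum>j<J. W (\<rho>+3) h n J j * (analytic_symbol a \<rho> (Suc q) s * of_nat (Suc q) powr (- cnj (xp (\<rho>+3) h j))))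
      = analytic_symbol a \<rho> (Suc q) s * Yf (\<rho>+3) h n J (Suc q)" for q
    unfolding Yf_def sum_distrib_left by (intro sum.cong refl) (simp add: algebra_simps)
  ultimately show ?thesis by simp
qed

lemma Ff_pointwise:
  assumes K: "dirichlet_series_kernel a \<rho>" and s: "s \<in> halfplane \<rho>" and n: "n \<ge> 1"
    and h: "\<forall>p q::nat. p \<ge> 1 \<longrightarrow> q \<ge> 1 \<longrightarrow> p \<noteq> q \<longrightarrow>
      exp (\<i> * of_real (h * (ln (real p) - ln (real q)))) \<noteq> 1"
  shows "(\<lambda>J. Ff a \<rho> h n J s) \<longlonglongrightarrow> analytic_symbol a \<rho> n s"
proof -
  define u where "u = complex_of_real (\<rho>+1)"
  have u: "u \<in> halfplane \<rho>" by (simp add: u_def halfplane_def)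
  have "summable (\<lambda>q. analytic_symbol a \<rho> (Suc q) s * of_nat (Suc q) powr (- cnj u))"
    using kappa_sums[OF K s u] by (rule sums_summable)
  then obtain C where C0: "C \<ge> 0" and C: "\<And>q. norm (analytic_symbol a \<rho> (Suc q) s * of_nat (Suc q) powr (- cnj u)) \<le> C"
    using summable_bounded_terms by blast
  have Ab: "norm (analytic_symbol a \<rho> (Suc q) s) \<le> C * real (Suc q) powr (\<rho>+1)" for q
  proof -
    have e: "norm (of_nat (Suc q) powr (- cnj u)) = real (Suc q) powr (-(\<rho>+1))"
      by (simp only: norm_nat_powr) (simp add: u_def)
    have "norm (analytic_symbol a \<rho> (Suc q) s) * real (Suc q) powr (-(\<rho>+1)) \<le> C"
      using C[of q] unfolding norm_mult e .
    hence "norm (analytic_symbol a \<rho> (Suc q) s) * real (Suc q) powr (-(\<rho>+1)) * real (Suc q) powr (\<rho>+1)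
           \<le> C * real (Suc q) powr (\<rho>+1)"
      by (rule mult_right_mono) auto
    thus ?thesis by (simp add: mult.assoc powr_add[symmetric])
  qed
  have termb: "norm (analytic_symbol a \<rho> (Suc q) s * Yf (\<rho>+3) h n J (Suc q)) \<le> (C * real n powr (\<rho>+3)) * real (Suc q) powr (-2)"
    for J q
  proof -
    have "norm (analytic_symbol a \<rho> (Suc q) s * Yf (\<rho>+3) h n J (Suc q)) =
          norm (analytic_symbol a \<rho> (Suc q) s) * norm (Yf (\<rho>+3) h n J (Suc q))" by (simp add: norm_mult)
    also have "\<dots> \<le> (C * real (Suc q) powr (\<rho>+1)) * (real n powr (\<rho>+3) * real (Suc q) powr (-(\<rho>+3)))"
      by (intro mult_mono Ab Yf_norm) (auto intro!: mult_nonneg_nonneg C0)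
    also have "\<dots> = (C * real n powr (\<rho>+3)) * (real (Suc q) powr (\<rho>+1) * real (Suc q) powr (-(\<rho>+3)))"
      by (simp add: algebra_simps)
    also have "real (Suc q) powr (\<rho>+1) * real (Suc q) powr (-(\<rho>+3)) = real (Suc q) powr (-2)"
      by (simp add: powr_add[symmetric])
    finally show ?thesis .
  qed
  have T: "((\<lambda>J. suminf (\<lambda>q. analytic_symbol a \<rho> (Suc q) s * Yf (\<rho>+3) h n J (Suc q))) \<longlongrightarrow>
             suminf (\<lambda>q. analytic_symbol a \<rho> (Suc q) s * (if Suc q = n then 1 else 0))) sequentially"
  proof (rule conjunct2[OF conjunct2[OF tannerys_theorem]])
    show "((\<lambda>J. analytic_symbol a \<rho> (Suc q) s * Yf (\<rho>+3) h n J (Suc q)) \<longlongrightarrow>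
             analytic_symbol a \<rho> (Suc q) s * (if Suc q = n then 1 else 0)) sequentially" for q
      by (intro tendsto_intros Yf_lim n h)
    show "\<forall>\<^sub>F (q, J) in at_top \<times>\<^sub>F sequentially.
            norm (analytic_symbol a \<rho> (Suc q) s * Yf (\<rho>+3) h n J (Suc q)) \<le> (C * real n powr (\<rho>+3)) * real (Suc q) powr (-2)"
      using termb by (intro always_eventually) auto
    show "summable (\<lambda>q. (C * real n powr (\<rho>+3)) * real (Suc q) powr (-2))"
      by (intro summable_mult summable_pow2)
  qed simp
  have "(\<lambda>q. analytic_symbol a \<rho> (Suc q) s * (if Suc q = n then 1 else 0)) =
        (\<lambda>q. if q = n - 1 then analytic_symbol a \<rho> (Suc q) s else 0)"
    using n by (auto simp: fun_eq_iff)
  hence "suminf (\<lambda>q. analytic_symbol a \<rho> (Suc q) s * (if Suc q = n then 1 else 0)) = analytic_symbol a \<rho> n s"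
    using n sums_unique[OF sums_single[of "n-1" "\<lambda>q. analytic_symbol a \<rho> (Suc q) s"]] by simp
  moreover have "(\<lambda>J. suminf (\<lambda>q. analytic_symbol a \<rho> (Suc q) s * Yf (\<rho>+3) h n J (Suc q))) = (\<lambda>J. Ff a \<rho> h n J s)"
    using sums_unique[OF Ff_sums[OF K s]] by auto
  ultimately show ?thesis using T by simp
qed

lemma rkhs_complete:
  assumes R: "rkhs K X V ip" and F: "\<forall>k. F k \<in> V"
    and C: "\<forall>e>0. \<exists>N. \<forall>p\<ge>N. \<forall>q\<ge>N. Re (ip (\<lambda>x. F p x - F q x) (\<lambda>x. F p x - F q x)) < e"
  shows "\<exists>f\<in>V. (\<lambda>k. Re (ip (\<lambda>x. F k x - f x) (\<lambda>x. F k x - f x))) \<longlonglongrightarrow> 0"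
proof -
  have "\<forall>F :: nat \<Rightarrow> _ \<Rightarrow> complex. (\<forall>k. F k \<in> V) \<longrightarrow>
        (\<forall>e>0. \<exists>N. \<forall>p\<ge>N. \<forall>q\<ge>N.
            Re (ip (\<lambda>x. F p x - F q x) (\<lambda>x. F p x - F q x)) < e) \<longrightarrow>
        (\<exists>f\<in>V. (\<lambda>k. Re (ip (\<lambda>x. F k x - f x) (\<lambda>x. F k x - f x))) \<longlonglongrightarrow> 0)"
    using R unfolding rkhs_def by (elim conjE) assumption
  from this[THEN spec[of _ F]] F C show ?thesis by blast
qed

lemma rkhs_vanish: "rkhs K X V ip \<Longrightarrow> f \<in> V \<Longrightarrow> x \<notin> X \<Longrightarrow> f x = 0"
  unfolding rkhs_def by blast

context
  fixes a :: "nat \<Rightarrow> nat \<Rightarrow> complex" and \<rho> :: real and V ip h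
  assumes K: "dirichlet_series_kernel a \<rho>"
    and R: "rkhs (kappa a) (halfplane \<rho>) V ip"
    and h: "\<forall>p q::nat. p \<ge> 1 \<longrightarrow> q \<ge> 1 \<longrightarrow> p \<noteq> q \<longrightarrow>
      exp (\<i> * of_real (h * (ln (real p) - ln (real q)))) \<noteq> 1"
begin

lemma ks_in: "ks a \<rho> h j \<in> V"
  unfolding ks_def using reproducing(1)[OF R xp_in V_zero[OF R]] .

lemma Ff_in: "Ff a \<rho> h n J \<in> V"
  unfolding Ff_def by (rule V_sum[OF R]) (rule ks_in)

lemma ks_ip: "ip (ks a \<rho> h j) (ks a \<rho> h l) = kappa a (xp (\<rho>+3) h l) (xp (\<rho>+3) h j)"
proof -
  have "ip (ks a \<rho> h j) (ks a \<rho> h l) = ks a \<rho> h j (xp (\<rho>+3) h l)"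
    unfolding ks_def[of a \<rho> h l] using reproducing(2)[OF R xp_in ks_in] by simp
  also have "\<dots> = kappa a (xp (\<rho>+3) h l) (xp (\<rho>+3) h j)" using xp_in by (simp add: ks_def)
  finally show ?thesis .
qed

lemma Ff_ip: "ip (Ff a \<rho> h n J) (Ff a \<rho> h m KK) = Bf a \<rho> h m n KK J"
proof -
  have "ip (Ff a \<rho> h n J) (Ff a \<rho> h m KK) = (\<Sum>j<J. W (\<rho>+3) h n J j * ip (ks a \<rho> h j) (Ff a \<rho> h m KK))"
    unfolding Ff_def[of a \<rho> h n J] by (rule ip_sum1[OF R ks_in Ff_in])
  also have "\<dots> = (\<Sum>j<J. W (\<rho>+3) h n J j * (\<Sum>l<KK. cnj (W (\<rho>+3) h m KK l) * kappa a (xp (\<rho>+3) h l) (xp (\<rho>+3) h j)))"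
    unfolding Ff_def[of a \<rho> h m KK] by (simp only: ip_sum2[OF R ks_in ks_in] ks_ip)
  also have "\<dots> = Bf a \<rho> h m n KK J"
    unfolding Bf_def sum_distrib_left by (subst sum.swap) (simp add: algebra_simps)
  finally show ?thesis .
qed

lemma Ff_conv:
  assumes n: "n \<ge> 1"
  shows "analytic_symbol a \<rho> n \<in> V \<and>
         (\<lambda>k. Re (ip (\<lambda>x. Ff a \<rho> h n k x - analytic_symbol a \<rho> n x) (\<lambda>x. Ff a \<rho> h n k x - analytic_symbol a \<rho> n x))) \<longlonglongrightarrow> 0"
proof -
  let ?F = "Ff a \<rho> h n"
  have E: "ip (\<lambda>x. ?F p x - ?F q x) (\<lambda>x. ?F p x - ?F q x) =
           (Bf a \<rho> h n n p p - Bf a \<rho> h n n q p) - (Bf a \<rho> h n n p q - Bf a \<rho> h n n q q)" for p q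
    by (simp only: ip_diff1[OF R Ff_in Ff_in V_diff[OF R Ff_in Ff_in]] ip_diff2[OF R Ff_in Ff_in Ff_in] Ff_ip)
  have L: "((\<lambda>x. (Bf a \<rho> h n n (fst x) (fst x) - Bf a \<rho> h n n (snd x) (fst x)) -
                 (Bf a \<rho> h n n (fst x) (snd x) - Bf a \<rho> h n n (snd x) (snd x))) \<longlongrightarrow>
            (a n n - a n n) - (a n n - a n n)) (sequentially \<times>\<^sub>F sequentially)"
    by (intro tendsto_diff Bf_lim2[OF K n n h] filterlim_fst filterlim_snd)
  have L': "((\<lambda>x. Re (ip (\<lambda>y. ?F (fst x) y - ?F (snd x) y) (\<lambda>y. ?F (fst x) y - ?F (snd x) y))) \<longlongrightarrow> 0)
            (sequentially \<times>\<^sub>F sequentially)"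
    unfolding E using tendsto_Re[OF L] by simp
  have C: "\<forall>e>0. \<exists>N. \<forall>p\<ge>N. \<forall>q\<ge>N. Re (ip (\<lambda>x. ?F p x - ?F q x) (\<lambda>x. ?F p x - ?F q x)) < e"
  proof (intro allI impI)
    fix e :: real assume e: "e > 0"
    have "eventually (\<lambda>x. dist (Re (ip (\<lambda>y. ?F (fst x) y - ?F (snd x) y) (\<lambda>y. ?F (fst x) y - ?F (snd x) y))) 0 < e)
            (sequentially \<times>\<^sub>F sequentially)"
      using tendstoD[OF L' e] .
    then obtain N where "\<And>p q. p \<ge> N \<Longrightarrow> q \<ge> N \<Longrightarrow>
        dist (Re (ip (\<lambda>y. ?F p y - ?F q y) (\<lambda>y. ?F p y - ?F q y))) 0 < e"
      unfolding eventually_prod_sequentially by auto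
    thus "\<exists>N. \<forall>p\<ge>N. \<forall>q\<ge>N. Re (ip (\<lambda>x. ?F p x - ?F q x) (\<lambda>x. ?F p x - ?F q x)) < e"
      by (metis abs_less_iff diff_zero dist_real_def)
  qed
  obtain f where f: "f \<in> V" and Df: "(\<lambda>k. Re (ip (\<lambda>x. ?F k x - f x) (\<lambda>x. ?F k x - f x))) \<longlonglongrightarrow> 0"
    using rkhs_complete[OF R _ C] Ff_in by blast
  have "f = analytic_symbol a \<rho> n"
  proof
    fix s show "f s = analytic_symbol a \<rho> n s"
    proof (cases "s \<in> halfplane \<rho>")
      case True
      have "(\<lambda>k. ?F k s) \<longlonglongrightarrow> f s" by (rule pointwise_conv[OF R Ff_in f True Df])
      moreover have "(\<lambda>k. ?F k s) \<longlonglongrightarrow> analytic_symbol a \<rho> n s" by (rule Ff_pointwise[OF K True n h])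
      ultimately show ?thesis by (rule LIMSEQ_unique)
    next
      case False
      thus ?thesis using rkhs_vanish[OF R f False] by (simp add: analytic_symbol_def)
    qed
  qed
  thus ?thesis using f Df by simp
qed

lemma partC_ip:
  assumes m: "m \<ge> 1" and n: "n \<ge> 1"
  shows "a m n = ip (analytic_symbol a \<rho> n) (analytic_symbol a \<rho> m)"
proof -
  have l1: "(\<lambda>J. ip (Ff a \<rho> h n J) (Ff a \<rho> h m J)) \<longlonglongrightarrow> ip (analytic_symbol a \<rho> n) (analytic_symbol a \<rho> m)"
  proof (rule ip_cont[OF R Ff_in Ff_in])
    show "analytic_symbol a \<rho> n \<in> V" "analytic_symbol a \<rho> m \<in> V" using Ff_conv m n by blast+
    show "(\<lambda>J. Re (ip (\<lambda>x. Ff a \<rho> h n J x - analytic_symbol a \<rho> n x) (\<lambda>x. Ff a \<rho> h n J x - analytic_symbol a \<rho> n x))) \<longlonglongrightarrow> 0"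
      using Ff_conv n by blast
    show "(\<lambda>J. Re (ip (\<lambda>x. Ff a \<rho> h m J x - analytic_symbol a \<rho> m x) (\<lambda>x. Ff a \<rho> h m J x - analytic_symbol a \<rho> m x))) \<longlonglongrightarrow> 0"
      using Ff_conv m by blast
    show "(\<lambda>J. Re (ip (Ff a \<rho> h m J) (Ff a \<rho> h m J))) \<longlonglongrightarrow> Re (a m m)"
      unfolding Ff_ip by (intro tendsto_Re Bf_diag[OF K m m h])
  qed
  have l2: "(\<lambda>J. ip (Ff a \<rho> h n J) (Ff a \<rho> h m J)) \<longlonglongrightarrow> a m n"
    unfolding Ff_ip by (rule Bf_diag[OF K m n h])
  show ?thesis using LIMSEQ_unique[OF l2 l1] .
qed

end

theorem theorem2p3:
  fixes \<rho> :: real and a :: "nat \<Rightarrow> nat \<Rightarrow> complex"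
  assumes "dirichlet_series_kernel a \<rho>"
  shows "(psd_kernel (kappa a) (halfplane \<rho>) \<longleftrightarrow> psd_kernel a {1..}) \<and>
         (psd_kernel (kappa a) (halfplane \<rho>) \<longrightarrow>
            (\<forall>V ip. rkhs (kappa a) (halfplane \<rho>) V ip \<longrightarrow>
               (\<forall>n\<ge>1. analytic_symbol a \<rho> n \<in> V) \<and>
               (\<forall>m\<ge>1. \<forall>n\<ge>1. a m n = ip (analytic_symbol a \<rho> n) (analytic_symbol a \<rho> m))))"
proof -
  have 1: "psd_kernel (kappa a) (halfplane \<rho>) \<longleftrightarrow> psd_kernel a {1..}"
    using partA[OF assms] partB[OF assms] by blast
  have 2: "(\<forall>n\<ge>1. analytic_symbol a \<rho> n \<in> V) \<and>
           (\<forall>m\<ge>1. \<forall>n\<ge>1. a m n = ip (analytic_symbol a \<rho> n) (analytic_symbol a \<rho> m))"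
    if R: "rkhs (kappa a) (halfplane \<rho>) V ip" for V ip
  proof -
    obtain h where h: "\<forall>p q::nat. p \<ge> 1 \<longrightarrow> q \<ge> 1 \<longrightarrow> p \<noteq> q \<longrightarrow>
        exp (\<i> * of_real (h * (ln (real p) - ln (real q)))) \<noteq> 1"
      using exists_good_h by blast
    show ?thesis using Ff_conv[OF assms R h] partC_ip[OF assms R h] by blast
  qed
  show ?thesis using 1 2 by blast
qed

end
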